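(* Let $M$ be an $n$-dimensional path-connected manifold and let $\psi_t,\varphi_t$ be a pair of commuting complete flows on $M$ ($\psi_s\circ\varphi_t=\varphi_t\circ\psi_s$ for all $s,t$). Suppose $\psi$ has a global Poincar\'e section $\Sigma$ that is relatively closed in $M$, and let $p:\Sigma\times\mathbb{R}\to M$, $p(\sigma,\tau)=\psi_\tau(\sigma)$. Then there is, for each $t$, a lift $\Phi_t$ of $\varphi_t$ to $\Sigma\times\mathbb{R}$ (i.e. $p\circ\Phi_t=\varphi_t\circ p$) of the form \[ \Phi_t(\sigma,\tau)=(k_t(\sigma),\tau+\omega(\sigma,t)). \] In addition, $\Phi_t$ can be chosen to be a flow on $\Sigma\times\mathbb{R}$, and hence $k_{t+s}=k_t\circ k_s$ and $\omega(\sigma,t+s)=\omega(\sigma,t)+\omega(k_t(\sigma),s)$.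
   Context: A global Poincar\'e section of a complete flow $\psi$ is a relatively closed (any sequence in $\Sigma$ converging in $M$ converges in $\Sigma$), codimension-one submanifold $\Sigma\subset M$ transverse to the flow such that every orbit of the flow has both forward and backward transversal intersections with $\Sigma$. *)

theory Defs
  imports "HOL-Analysis.Analysis"
begin

definition C1_on :: "'a::euclidean_space set \<Rightarrow> ('a \<Rightarrow> 'b::euclidean_space) \<Rightarrow> bool" where
  "C1_on S f \<longleftrightarrow> (\<exists>f'. (\<forall>x\<in>S. (f has_derivative blinfun_apply (f' x)) (at x))
                        \<and> continuous_on S f')"

definition chart :: "'m::topological_space set \<Rightarrow> ('m \<Rightarrow> 'e::euclidean_space) \<Rightarrow> bool" where
  "chart U h \<longleftrightarrow> open U \<and> open (h ` U) \<and> homeomorphism U (h ` U) h (inv_into U h)"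

definition compatible_chart ::
  "('m::topological_space set \<times> ('m \<Rightarrow> 'e::euclidean_space)) set \<Rightarrow> 'm set \<Rightarrow> ('m \<Rightarrow> 'e) \<Rightarrow> bool" where
  "compatible_chart A U h \<longleftrightarrow> chart U h \<and>
     (\<forall>(V,k)\<in>A. C1_on (h ` (U \<inter> V)) (k \<circ> inv_into U h) \<and> C1_on (k ` (U \<inter> V)) (h \<circ> inv_into V k))"

definition C1_atlas :: "('m::topological_space set \<times> ('m \<Rightarrow> 'e::euclidean_space)) set \<Rightarrow> bool" where
  "C1_atlas A \<longleftrightarrow> (\<forall>(U,h)\<in>A. compatible_chart A U h) \<and> \<Union>(fst ` A) = UNIV"

text \<open>An n-dimensional (Hausdorff, second countable) C1 manifold: the space UNIV of type 'm
  with an atlas of charts into real^'n (n = CARD('n)).\<close>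
definition manifold :: "('m::topological_space set \<times> ('m \<Rightarrow> real^'n)) set \<Rightarrow> bool" where
  "manifold A \<longleftrightarrow> C1_atlas A \<and>
     (\<forall>x y::'m. x \<noteq> y \<longrightarrow> (\<exists>U V. open U \<and> open V \<and> x \<in> U \<and> y \<in> V \<and> U \<inter> V = {})) \<and>
     (\<exists>B::'m set set. countable B \<and> (\<forall>b\<in>B. open b) \<and> (\<forall>S. open S \<longrightarrow> (\<exists>B'\<subseteq>B. S = \<Union>B')))"

definition C1_flow :: "('m::topological_space set \<times> ('m \<Rightarrow> real^'n)) set \<Rightarrow> (real \<Rightarrow> 'm \<Rightarrow> 'm) \<Rightarrow> bool" where
  "C1_flow A \<psi> \<longleftrightarrow> (\<forall>x. \<psi> 0 x = x) \<and> (\<forall>s t x. \<psi> (s + t) x = \<psi> s (\<psi> t x)) \<and>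
     continuous_on UNIV (\<lambda>(t,x). \<psi> t x) \<and>
     (\<forall>(U,h)\<in>A. \<forall>(V,k)\<in>A.
        C1_on {(t, h x) | t x. x \<in> U \<and> \<psi> t x \<in> V} (\<lambda>(t,y). k (\<psi> t (inv_into U h y))))"

text \<open>Sigma is a codimension-one (embedded) C1 submanifold transverse to the flow \<psi>:
  around each point of Sigma there is a compatible slice chart in which Sigma is the
  coordinate hyperplane {y. y $ i = 0} and the flow direction has nonzero i-th component.\<close>
definition transverse_hypersurface ::
  "('m::topological_space set \<times> ('m \<Rightarrow> real^'n)) set \<Rightarrow> (real \<Rightarrow> 'm \<Rightarrow> 'm) \<Rightarrow> 'm set \<Rightarrow> bool" where
  "transverse_hypersurface A \<psi> \<Sigma> \<longleftrightarrow>
     (\<forall>\<sigma>\<in>\<Sigma>. \<exists>U h i. \<sigma> \<in> U \<and> compatible_chart A U h \<and>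
        h ` (U \<inter> \<Sigma>) = h ` U \<inter> {y. y $ i = 0} \<and>
        (\<exists>v. ((\<lambda>t. h (\<psi> t \<sigma>)) has_vector_derivative v) (at 0) \<and> v $ i \<noteq> 0))"

definition relatively_closed :: "'m::topological_space set \<Rightarrow> bool" where
  "relatively_closed \<Sigma> \<longleftrightarrow> (\<forall>s x. (\<forall>j. s j \<in> \<Sigma>) \<and> s \<longlonglongrightarrow> x \<longrightarrow> x \<in> \<Sigma>)"

definition global_poincare_section ::
  "('m::topological_space set \<times> ('m \<Rightarrow> real^'n)) set \<Rightarrow> (real \<Rightarrow> 'm \<Rightarrow> 'm) \<Rightarrow> 'm set \<Rightarrow> bool" where
  "global_poincare_section A \<psi> \<Sigma> \<longleftrightarrow> relatively_closed \<Sigma> \<and> transverse_hypersurface A \<psi> \<Sigma> \<and>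
     (\<forall>x. (\<exists>t>0. \<psi> t x \<in> \<Sigma>) \<and> (\<exists>t<0. \<psi> t x \<in> \<Sigma>))"

end

theory Submission
  imports Defs
begin


lemma continuous_on_real_eps:
  fixes f :: "'a::topological_space \<Rightarrow> real"
  assumes "\<And>x e. x\<in>D \<Longrightarrow> e>0 \<Longrightarrow> \<exists>A. open A \<and> x\<in>A \<and> (\<forall>y\<in>D\<inter>A. \<bar>f y - f x\<bar> < e)"
  shows "continuous_on D f"
  unfolding continuous_on_topological
proof (intro ballI allI impI)
  fix x B assume x: "x\<in>D" and B: "open B" "f x \<in> B"
  then obtain e where e: "e>0" "ball (f x) e \<subseteq> B" using openE by blast
  from assms[OF x e(1)] obtain A where "open A" "x\<in>A" "\<forall>y\<in>D\<inter>A. \<bar>f y - f x\<bar> < e" by blast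
  then show "\<exists>A. open A \<and> x \<in> A \<and> (\<forall>y\<in>D. y \<in> A \<longrightarrow> f y \<in> B)"
    using e(2) by (auto simp: dist_real_def abs_minus_commute subset_iff)
qed

locale flowsec =
  fixes \<psi> :: "real \<Rightarrow> 'm::topological_space \<Rightarrow> 'm" and S :: "'m set"
  assumes f0: "\<And>x. \<psi> 0 x = x"
   and fadd: "\<And>s t x. \<psi> (s + t) x = \<psi> s (\<psi> t x)"
   and fcont: "continuous_on UNIV (\<lambda>(t,x). \<psi> t x)"
   and Sclosed: "closed S"
   and fb: "\<And>\<sigma>. \<sigma> \<in> S \<Longrightarrow> \<exists>W \<delta> \<tau>. open W \<and> \<sigma> \<in> W \<and> \<delta> > 0 \<and> continuous_on W \<tau> \<and>
            (\<forall>x\<in>W. \<bar>\<tau> x\<bar> < \<delta> \<and> \<psi> (\<tau> x) x \<in> S \<and> (\<forall>t. \<bar>t\<bar> < \<delta> \<and> \<psi> t x \<in> S \<longrightarrow> t = \<tau> x))"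
   and fwd: "\<And>x. \<exists>t>0. \<psi> t x \<in> S"
   and bwd: "\<And>x. \<exists>t<0. \<psi> t x \<in> S"
begin

lemma cont_comp:
  assumes "continuous_on D a" "continuous_on D b"
  shows "continuous_on D (\<lambda>z. \<psi> (a z) (b z))"
proof -
  have "continuous_on D ((\<lambda>(t,x). \<psi> t x) \<circ> (\<lambda>z. (a z, b z)))"
    by (rule continuous_on_compose[OF continuous_on_Pair[OF assms]])
       (rule continuous_on_subset[OF fcont], simp)
  then show ?thesis by (simp add: o_def)
qed

lemma ff: "\<psi> a (\<psi> b x) = \<psi> (a+b) x" by (simp add: fadd)

lemma fb_zero:
  assumes "x \<in> W" "x \<in> S" "\<forall>x\<in>W. \<bar>\<tau> x\<bar> < \<delta> \<and> \<psi> (\<tau> x) x \<in> S \<and> (\<forall>t. \<bar>t\<bar> < \<delta> \<and> \<psi> t x \<in> S \<longrightarrow> t = \<tau> x)"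
  shows "\<tau> x = 0"
proof -
  have "\<bar>\<tau> x\<bar> < \<delta>" using assms by auto
  hence "\<delta> > 0" by linarith
  thus ?thesis using assms by (metis abs_zero f0)
qed

lemma local_lift:
  fixes Q :: "'x::topological_space \<Rightarrow> 'm"
  assumes Q: "continuous_on D Q" and z0: "z0 \<in> D" and h: "\<psi> (- w0) (Q z0) \<in> S"
  shows "\<exists>N c. open N \<and> z0 \<in> N \<and> continuous_on (D \<inter> N) c \<and> c z0 = w0 \<and>
            (\<forall>z\<in>D\<inter>N. \<psi> (- c z) (Q z) \<in> S)"
proof -
  define P where "P z = \<psi> (- w0) (Q z)" for z
  obtain W \<delta> \<tau> where W: "open W" "P z0 \<in> W" "\<delta> > 0" "continuous_on W \<tau>"
    "\<forall>x\<in>W. \<bar>\<tau> x\<bar> < \<delta> \<and> \<psi> (\<tau> x) x \<in> S \<and> (\<forall>t. \<bar>t\<bar> < \<delta> \<and> \<psi> t x \<in> S \<longrightarrow> t = \<tau> x)"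
    using fb[OF h] unfolding P_def by blast
  have Pc: "continuous_on D P" unfolding P_def by (intro cont_comp continuous_on_const Q)
  then obtain A where A: "open A" "A \<inter> D = P -` W \<inter> D"
    using continuous_on_open_invariant W(1) by metis
  have t0: "\<tau> (P z0) = 0" using fb_zero[OF W(2) _ W(5)] h P_def by auto
  show ?thesis
  proof (intro exI conjI)
    show "open A" by fact
    show "z0 \<in> A" using A z0 W(2) by auto
    have "continuous_on (D \<inter> A) (\<lambda>z. \<tau> (P z))"
      by (rule continuous_on_compose2[OF W(4) continuous_on_subset[OF Pc]]) (use A in auto)
    then show "continuous_on (D \<inter> A) (\<lambda>z. w0 - \<tau> (P z))"
      by (intro continuous_on_diff continuous_on_const)
    show "w0 - \<tau> (P z0) = w0" using t0 by simp
    show "\<forall>z\<in>D \<inter> A. \<psi> (- (w0 - \<tau> (P z))) (Q z) \<in> S"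
    proof
      fix z assume "z \<in> D \<inter> A"
      then have "P z \<in> W" using A by auto
      then have "\<psi> (\<tau> (P z)) (P z) \<in> S" using W(5) by blast
      then show "\<psi> (- (w0 - \<tau> (P z))) (Q z) \<in> S" by (simp add: P_def ff)
    qed
  qed
qed


lemma local_agree:
  fixes Q :: "'x::topological_space \<Rightarrow> 'm"
  assumes Q: "continuous_on D Q" and c1: "continuous_on D wa" and c2: "continuous_on D wb"
    and l1: "\<forall>z\<in>D. \<psi> (- wa z) (Q z) \<in> S" and l2: "\<forall>z\<in>D. \<psi> (- wb z) (Q z) \<in> S"
    and za: "za \<in> D" and eq: "wa za = wb za"
  shows "\<exists>N. open N \<and> za \<in> N \<and> (\<forall>z\<in>D\<inter>N. wa z = wb z)"
proof -
  define P where "P z = \<psi> (- wa z) (Q z)" for z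
  have h: "P za \<in> S" using l1 za P_def by auto
  obtain W \<delta> \<tau> where W: "open W" "P za \<in> W" "\<delta> > 0" "continuous_on W \<tau>"
    "\<forall>x\<in>W. \<bar>\<tau> x\<bar> < \<delta> \<and> \<psi> (\<tau> x) x \<in> S \<and> (\<forall>t. \<bar>t\<bar> < \<delta> \<and> \<psi> t x \<in> S \<longrightarrow> t = \<tau> x)"
    using fb[OF h] by blast
  have Pc: "continuous_on D P" unfolding P_def by (intro cont_comp continuous_on_minus c1 Q)
  then obtain A1 where A1: "open A1" "A1 \<inter> D = P -` W \<inter> D"
    using continuous_on_open_invariant W(1) by metis
  have dc: "continuous_on D (\<lambda>z. wa z - wb z)" by (intro continuous_on_diff c1 c2)
  then obtain A2 where A2: "open A2" "A2 \<inter> D = (\<lambda>z. wa z - wb z) -` {-\<delta><..<\<delta>} \<inter> D"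
    using continuous_on_open_invariant[of D "\<lambda>z. wa z - wb z"] by (metis open_greaterThanLessThan)
  show ?thesis
  proof (intro exI conjI ballI)
    show "open (A1 \<inter> A2)" using A1 A2 by auto
    show "za \<in> A1 \<inter> A2" using A1 A2 za W eq by auto
    fix z assume z: "z \<in> D \<inter> (A1 \<inter> A2)"
    have PW: "P z \<in> W" using A1 z by blast
    have PS: "P z \<in> S" using l1 z P_def by auto
    have "wa z - wb z \<in> {-\<delta><..<\<delta>}" using A2 z by blast
    then have d: "\<bar>wa z - wb z\<bar> < \<delta>" by auto
    have "\<tau> (P z) = 0" by (rule fb_zero[OF PW PS W(5)])
    moreover have "\<psi> (wa z - wb z) (P z) \<in> S" using l2 z by (simp add: P_def ff)
    ultimately have "wa z - wb z = 0" using W(5) PW d by metis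
    then show "wa z = wb z" by simp
  qed
qed

lemma lift_unique:
  fixes Q :: "'x::topological_space \<Rightarrow> 'm"
  assumes D: "connected D" and Q: "continuous_on D Q" and c1: "continuous_on D wa" and c2: "continuous_on D wb"
    and l1: "\<forall>z\<in>D. \<psi> (- wa z) (Q z) \<in> S" and l2: "\<forall>z\<in>D. \<psi> (- wb z) (Q z) \<in> S"
    and za: "za \<in> D" and eq: "wa za = wb za"
  shows "\<forall>z\<in>D. wa z = wb z"
proof -
  let ?E = "{z\<in>D. wa z - wb z = 0}"
  have cl: "closedin (top_of_set D) ?E"
    by (rule continuous_closedin_preimage_constant) (intro continuous_on_diff c1 c2)
  have op: "openin (top_of_set D) ?E"
  proof (subst openin_subopen, intro ballI)
    fix z assume z: "z \<in> ?E"
    obtain N where N: "open N" "z \<in> N" "\<forall>z\<in>D\<inter>N. wa z = wb z"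
      using local_agree[OF Q c1 c2 l1 l2, of z] z by auto
    show "\<exists>T. openin (top_of_set D) T \<and> z \<in> T \<and> T \<subseteq> ?E"
      by (rule exI[of _ "D \<inter> N"]) (use N z in \<open>auto simp: openin_open_Int\<close>)
  qed
  have "?E = {} \<or> ?E = D" using D cl op unfolding connected_clopen by blast
  then have "?E = D" using za eq by auto
  then show ?thesis by auto
qed

lemma hits_closed: "closed {t. \<psi> t y \<in> S}"
proof -
  have "continuous_on UNIV (\<lambda>t. \<psi> t y)" by (intro cont_comp continuous_on_id continuous_on_const)
  then show ?thesis using closed_vimage[OF Sclosed] by (auto simp: vimage_def)
qed

definition rp where "rp y = Inf {t. t > 0 \<and> \<psi> t y \<in> S}"

lemma no_small_hits:
  assumes "y \<in> S" shows "\<exists>\<delta>>0. \<forall>t. \<bar>t\<bar> < \<delta> \<and> \<psi> t y \<in> S \<longrightarrow> t = 0"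
proof -
  obtain W \<delta> \<tau> where W: "open W" "y \<in> W" "\<delta> > 0"
    "\<forall>x\<in>W. \<bar>\<tau> x\<bar> < \<delta> \<and> \<psi> (\<tau> x) x \<in> S \<and> (\<forall>t. \<bar>t\<bar> < \<delta> \<and> \<psi> t x \<in> S \<longrightarrow> t = \<tau> x)"
    using fb[OF assms] by blast
  have "\<tau> y = 0" by (rule fb_zero[OF W(2) assms W(4)])
  then show ?thesis using W by metis
qed

lemma rp:
  assumes y: "y \<in> S"
  shows "rp y > 0" "\<psi> (rp y) y \<in> S" "\<And>t. 0 < t \<Longrightarrow> t < rp y \<Longrightarrow> \<psi> t y \<notin> S"
proof -
  obtain \<delta> where d: "\<delta> > 0" "\<forall>t. \<bar>t\<bar> < \<delta> \<and> \<psi> t y \<in> S \<longrightarrow> t = 0" using no_small_hits[OF y] by blast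
  have eq: "{t. t > 0 \<and> \<psi> t y \<in> S} = {\<delta>..} \<inter> {t. \<psi> t y \<in> S}"
  proof -
    have "\<delta> \<le> t" if "t > 0" "\<psi> t y \<in> S" for t using d that by (metis abs_of_pos not_le less_irrefl)
    then show ?thesis using d by auto
  qed
  have ne: "{t. t > 0 \<and> \<psi> t y \<in> S} \<noteq> {}" using fwd[of y] by auto
  have cl: "closed {t. t > 0 \<and> \<psi> t y \<in> S}" by (subst eq) (intro closed_Int closed_atLeast hits_closed)
  have bdd: "bdd_below {t. t > 0 \<and> \<psi> t y \<in> S}" by (rule bdd_belowI[of _ 0]) auto
  have "rp y \<in> {t. t > 0 \<and> \<psi> t y \<in> S}"
    unfolding rp_def by (rule closed_contains_Inf[OF ne bdd cl])
  then show "rp y > 0" "\<psi> (rp y) y \<in> S" by auto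
  fix t assume "0 < t" "t < rp y"
  show "\<psi> t y \<notin> S"
  proof
    assume "\<psi> t y \<in> S"
    then have "rp y \<le> t" unfolding rp_def using \<open>0<t\<close>
      by (intro cInf_lower) (auto intro: bdd_belowI[of _ 0])
    then show False using \<open>t < rp y\<close> by simp
  qed
qed

lemma rp_le: "y \<in> S \<Longrightarrow> 0 < t \<Longrightarrow> \<psi> t y \<in> S \<Longrightarrow> rp y \<le> t"
  using rp(3)[of y t] by fastforce


lemma cont_psi_t: "continuous_on UNIV (\<psi> r)"
  using cont_comp[OF continuous_on_const continuous_on_id, of UNIV r] by simp

lemma rp_cont: "continuous_on S rp"
proof (rule continuous_on_real_eps)
  fix y0 e assume y0: "y0 \<in> S" and e: "(e::real) > 0"
  define r0 where "r0 = rp y0"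
  have r0: "r0 > 0" "\<psi> r0 y0 \<in> S" using rp[OF y0] r0_def by auto
  define e' where "e' = min (e/2) (r0/2)"
  have e': "e' > 0" "e' \<le> e/2" "e' \<le> r0/2" using e r0 by (auto simp: e'_def)
  obtain W1 \<delta>1 \<tau>1 where W1: "open W1" "\<psi> r0 y0 \<in> W1" "\<delta>1 > 0" "continuous_on W1 \<tau>1"
    "\<forall>x\<in>W1. \<bar>\<tau>1 x\<bar> < \<delta>1 \<and> \<psi> (\<tau>1 x) x \<in> S \<and> (\<forall>t. \<bar>t\<bar> < \<delta>1 \<and> \<psi> t x \<in> S \<longrightarrow> t = \<tau>1 x)"
    using fb[OF r0(2)] by blast
  have t1: "\<tau>1 (\<psi> r0 y0) = 0" by (rule fb_zero[OF W1(2) r0(2) W1(5)])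
  obtain B1 where B1: "open B1" "\<psi> r0 y0 \<in> B1" "\<forall>x\<in>W1. x\<in>B1 \<longrightarrow> \<tau>1 x \<in> {-e'<..<e'}"
    using W1(4) W1(2) t1 e'(1) unfolding continuous_on_topological
    by (metis open_greaterThanLessThan greaterThanLessThan_iff neg_less_0_iff_less)
  define A1 where "A1 = \<psi> r0 -` (W1 \<inter> B1)"
  have A1: "open A1" "y0 \<in> A1" unfolding A1_def using W1 B1 by (auto intro: open_vimage cont_psi_t)
  have up: "rp y < r0 + e'" if y: "y \<in> A1" "y \<in> S" for y
  proof -
    define x where "x = \<psi> r0 y"
    have x: "x \<in> W1" "x \<in> B1" using y A1_def x_def by auto
    have te: "\<bar>\<tau>1 x\<bar> < e'" using B1(3) x by auto
    have hit: "\<psi> (\<tau>1 x + r0) y \<in> S" using W1(5) x by (simp add: fadd x_def)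
    have "rp y \<le> \<tau>1 x + r0" by (rule rp_le[OF y(2) _ hit]) (use te e' in auto)
    then show ?thesis using te by auto
  qed
  obtain W0 \<delta>0 \<tau>0 where W0: "open W0" "y0 \<in> W0" "\<delta>0 > 0" "continuous_on W0 \<tau>0"
    "\<forall>x\<in>W0. \<bar>\<tau>0 x\<bar> < \<delta>0 \<and> \<psi> (\<tau>0 x) x \<in> S \<and> (\<forall>t. \<bar>t\<bar> < \<delta>0 \<and> \<psi> t x \<in> S \<longrightarrow> t = \<tau>0 x)"
    using fb[OF y0] by blast
  define K where "K = {\<delta>0..r0 - e'}"
  define Ob where "Ob = (\<lambda>p. \<psi> (snd p) (fst p)) -` (- S)"
  have Oo: "open Ob" unfolding Ob_def
    by (intro open_vimage cont_comp continuous_on_fst continuous_on_snd continuous_on_id)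
       (use Sclosed in auto)
  have "{y0} \<times> K \<subseteq> Ob"
  proof
    fix p assume "p \<in> {y0} \<times> K"
    then obtain t where p: "p = (y0, t)" "\<delta>0 \<le> t" "t \<le> r0 - e'" unfolding K_def by auto
    have "\<psi> t y0 \<notin> S" using rp(3)[OF y0, of t] p W0(3) e' r0_def by auto
    then show "p \<in> Ob" using p Ob_def by auto
  qed
  then obtain X0 where X0: "y0 \<in> X0" "open X0" "X0 \<times> K \<subseteq> Ob"
    using Elementary_Topology.tube_lemma[OF compact_Icc[of \<delta>0 "r0-e'"] Oo] K_def by metis
  have lo: "r0 - e' \<le> rp y" if y: "y \<in> W0" "y \<in> X0" "y \<in> S" for y
  proof (rule ccontr)
    assume c: "\<not> r0 - e' \<le> rp y"
    have ty: "\<tau>0 y = 0" by (rule fb_zero[OF y(1) y(3) W0(5)])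
    have rpy: "rp y > 0" "\<psi> (rp y) y \<in> S" using rp[OF y(3)] by auto
    show False
    proof (cases "rp y < \<delta>0")
      case True
      then have "rp y = \<tau>0 y" using W0(5) y(1) rpy by auto
      then show False using ty rpy by simp
    next
      case False
      then have "(y, rp y) \<in> Ob" using X0(3) y(2) c unfolding K_def by auto
      then show False using rpy Ob_def by auto
    qed
  qed
  show "\<exists>A. open A \<and> y0 \<in> A \<and> (\<forall>y\<in>S \<inter> A. \<bar>rp y - rp y0\<bar> < e)"
  proof (intro exI conjI ballI)
    show "open (A1 \<inter> W0 \<inter> X0)" using A1 W0 X0 by auto
    show "y0 \<in> A1 \<inter> W0 \<inter> X0" using A1 W0 X0 by auto
    fix y assume "y \<in> S \<inter> (A1 \<inter> W0 \<inter> X0)"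
    then have "rp y < r0 + e'" "r0 - e' \<le> rp y" using up lo by auto
    then show "\<bar>rp y - rp y0\<bar> < e" using e' r0_def by auto
  qed
qed

primrec hp where "hp 0 y = 0" | "hp (Suc n) y = hp n y + rp (\<psi> (hp n y) y)"

lemma hp_hit: "y \<in> S \<Longrightarrow> \<psi> (hp n y) y \<in> S"
proof (induction n)
  case 0 then show ?case by (simp add: f0)
next
  case (Suc n)
  have "\<psi> (rp (\<psi> (hp n y) y)) (\<psi> (hp n y) y) \<in> S" using rp(2)[OF Suc.IH[OF Suc.prems]] .
  then show ?case by (simp add: ff add.commute)
qed

lemma hp_cont: "continuous_on S (hp n)"
proof (induction n)
  case 0 then show ?case by (simp add: continuous_on_const)
next
  case (Suc n)
  have c1: "continuous_on S (\<lambda>y. \<psi> (hp n y) y)" by (intro cont_comp Suc continuous_on_id)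
  have "continuous_on S (\<lambda>y. rp (\<psi> (hp n y) y))"
    by (rule continuous_on_compose2[OF rp_cont c1]) (use hp_hit in auto)
  then show ?case using Suc by (simp add: continuous_on_add)
qed

lemma hp_mono: "y \<in> S \<Longrightarrow> hp n y < hp (Suc n) y"
  using rp(1)[OF hp_hit] by simp

lemma hp_unbounded:
  assumes y: "y \<in> S" shows "\<exists>n. hp n y > M"
proof (rule ccontr)
  assume "\<not> (\<exists>n. hp n y > M)"
  then have bd: "\<forall>n. hp n y \<le> M" by (simp add: not_less)
  have inc: "incseq (\<lambda>n. hp n y)" by (rule incseq_SucI) (use hp_mono[OF y] in \<open>auto intro: less_imp_le\<close>)
  obtain L where L: "(\<lambda>n. hp n y) \<longlonglongrightarrow> L" using incseq_convergent[OF inc bd] by metis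
  have ct: "continuous_on UNIV (\<lambda>t. \<psi> t y)" by (intro cont_comp continuous_on_id continuous_on_const)
  have zL: "(\<lambda>n. \<psi> (hp n y) y) \<longlonglongrightarrow> \<psi> L y"
    using continuous_on_tendsto_compose[OF ct L] by auto
  have LS: "\<psi> L y \<in> S"
    by (rule Lim_in_closed_set[OF Sclosed _ _ zL]) (auto simp: hp_hit[OF y])
  obtain W \<delta> \<tau> where W: "open W" "\<psi> L y \<in> W" "\<delta> > 0"
    "\<forall>x\<in>W. \<bar>\<tau> x\<bar> < \<delta> \<and> \<psi> (\<tau> x) x \<in> S \<and> (\<forall>t. \<bar>t\<bar> < \<delta> \<and> \<psi> t x \<in> S \<longrightarrow> t = \<tau> x)"
    using fb[OF LS] by blast
  have ev1: "\<forall>\<^sub>F n in sequentially. \<psi> (hp n y) y \<in> W" using zL W(1,2) by (rule topological_tendstoD)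
  have ev2: "\<forall>\<^sub>F n in sequentially. dist (hp n y) L < \<delta>/2" using L W(3) by (intro tendstoD) auto
  obtain N where N: "\<And>n. n \<ge> N \<Longrightarrow> \<psi> (hp n y) y \<in> W \<and> dist (hp n y) L < \<delta>/2"
    using eventually_conj[OF ev1 ev2] unfolding eventually_sequentially by blast
  define x where "x = \<psi> (hp N y) y"
  have xW: "x \<in> W" and xS: "x \<in> S" using N[of N] hp_hit[OF y] x_def by auto
  have tx: "\<tau> x = 0" by (rule fb_zero[OF xW xS W(4)])
  define d where "d = hp (Suc N) y - hp N y"
  have a: "\<bar>hp N y - L\<bar> < \<delta>/2" "\<bar>hp (Suc N) y - L\<bar> < \<delta>/2"
    using N[of N] N[of "Suc N"] by (auto simp: dist_real_def simp del: hp.simps)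
  have "\<bar>d\<bar> < \<delta>" unfolding d_def using a unfolding abs_less_iff by linarith
  moreover have "\<psi> d x \<in> S" using hp_hit[OF y, of "Suc N"] by (simp add: x_def d_def ff add.commute)
  ultimately have "d = 0" using W(4) xW tx by metis
  then show False using hp_mono[OF y, of N] d_def by simp
qed

lemma hit_is_hp:
  assumes y: "y \<in> S" and d: "d \<ge> 0" and h: "\<psi> d y \<in> S"
  shows "\<exists>n. d = hp n y"
proof -
  obtain m where m: "hp m y > d" using hp_unbounded[OF y] by blast
  define m0 where "m0 = (LEAST m. hp m y > d)"
  have m0: "hp m0 y > d" unfolding m0_def by (rule LeastI[of _ m]) (rule m)
  have "m0 \<noteq> 0" using m0 d by (metis hp.simps(1) not_less)
  then obtain n where n: "m0 = Suc n" using not0_implies_Suc by blast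
  have "\<not> hp n y > d" unfolding m0_def by (rule not_less_Least) (use n m0_def in auto)
  then have le: "hp n y \<le> d" by simp
  show ?thesis
  proof (cases "hp n y < d")
    case True
    define z where "z = \<psi> (hp n y) y"
    have zS: "z \<in> S" using hp_hit[OF y] z_def by auto
    have "d - hp n y < rp z" using m0 n z_def by simp
    moreover have "\<psi> (d - hp n y) z \<in> S" using h by (simp add: z_def ff)
    ultimately show ?thesis using rp(3)[OF zS, of "d - hp n y"] True by auto
  next
    case False then show ?thesis using le by auto
  qed
qed


lemma rev_fb:
  assumes "\<sigma> \<in> S"
  shows "\<exists>W \<delta> \<tau>. open W \<and> \<sigma> \<in> W \<and> 0 < \<delta> \<and> continuous_on W \<tau> \<and>
          (\<forall>x\<in>W. \<bar>\<tau> x\<bar> < \<delta> \<and> \<psi> (- \<tau> x) x \<in> S \<and> (\<forall>t. \<bar>t\<bar> < \<delta> \<and> \<psi> (- t) x \<in> S \<longrightarrow> t = \<tau> x))"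
proof -
  obtain W \<delta> \<tau> where W: "open W" "\<sigma> \<in> W" "\<delta> > 0" "continuous_on W \<tau>"
    "\<forall>x\<in>W. \<bar>\<tau> x\<bar> < \<delta> \<and> \<psi> (\<tau> x) x \<in> S \<and> (\<forall>t. \<bar>t\<bar> < \<delta> \<and> \<psi> t x \<in> S \<longrightarrow> t = \<tau> x)"
    using fb[OF assms] by blast
  show ?thesis
  proof (intro exI[of _ W] exI[of _ \<delta>] exI[of _ "\<lambda>x. - \<tau> x"] conjI ballI allI impI)
    show "continuous_on W (\<lambda>x. - \<tau> x)" using W(4) by (rule continuous_on_minus)
    fix x assume x: "x \<in> W"
    have Wx: "\<bar>\<tau> x\<bar> < \<delta>" "\<psi> (\<tau> x) x \<in> S" "\<forall>t. \<bar>t\<bar> < \<delta> \<and> \<psi> t x \<in> S \<longrightarrow> t = \<tau> x"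
      using W(5) x by blast+
    show "\<bar>- \<tau> x\<bar> < \<delta>" "\<psi> (- (- \<tau> x)) x \<in> S" using Wx(1,2) by simp_all
    fix t assume "\<bar>t\<bar> < \<delta> \<and> \<psi> (- t) x \<in> S"
    then have "\<bar>-t\<bar> < \<delta> \<and> \<psi> (- t) x \<in> S" by simp
    then have "- t = \<tau> x" using Wx(3) by blast
    then show "t = - \<tau> x" by simp
  qed (use W(1-3) in auto)
qed

lemma rev_cont: "continuous_on UNIV (\<lambda>(t, x). \<psi> (- t) x)"
proof -
  have "continuous_on UNIV (\<lambda>p::real\<times>'m. \<psi> (- fst p) (snd p))"
    by (intro cont_comp continuous_on_minus continuous_on_fst continuous_on_snd continuous_on_id)
  then show ?thesis by (simp add: case_prod_unfold)
qed

lemma rev_flowsec: "flowsec (\<lambda>t. \<psi> (-t)) S"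
proof (unfold_locales)
  show "\<psi> (- 0) x = x" for x by (simp add: f0)
  show "\<psi> (- (s + t)) x = \<psi> (- s) (\<psi> (- t) x)" for s t x by (simp add: ff)
  show "continuous_on UNIV (\<lambda>(t, x). \<psi> (- t) x)" by (rule rev_cont)
  show "closed S" by (rule Sclosed)
  show "\<exists>t>0. \<psi> (- t) x \<in> S" for x
  proof -
    obtain t where "t < 0" "\<psi> t x \<in> S" using bwd[of x] by blast
    then show ?thesis by (intro exI[of _ "-t"]) simp
  qed
  show "\<exists>t<0. \<psi> (- t) x \<in> S" for x
  proof -
    obtain t where "t > 0" "\<psi> t x \<in> S" using fwd[of x] by blast
    then show ?thesis by (intro exI[of _ "-t"]) simp
  qed
qed (rule rev_fb)

lemma any_hit:
  assumes y: "y \<in> S" and h: "\<psi> d y \<in> S"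
  shows "\<exists>c. continuous_on S c \<and> c y = d \<and> (\<forall>z\<in>S. \<psi> (c z) z \<in> S)"
proof (cases "d \<ge> 0")
  case True
  then obtain n where "d = hp n y" using hit_is_hp[OF y _ h] by blast
  then show ?thesis using hp_cont hp_hit by blast
next
  case False
  interpret R: flowsec "\<lambda>t. \<psi> (-t)" S by (rule rev_flowsec)
  obtain n where n: "-d = R.hp n y" using R.hit_is_hp[OF y, of "-d"] False h by auto
  show ?thesis
  proof (intro exI conjI ballI)
    show "continuous_on S (\<lambda>z. - R.hp n z)" by (intro continuous_on_minus R.hp_cont)
    show "- R.hp n y = d" using n by simp
    fix z assume "z \<in> S" then show "\<psi> (- R.hp n z) z \<in> S" using R.hp_hit by blast
  qed
qed

end


lemma cont_from_local:
  fixes f :: "'a::topological_space \<Rightarrow> 'b::topological_space"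
  assumes "\<And>x. x \<in> D \<Longrightarrow> \<exists>V. open V \<and> x \<in> V \<and> continuous_on (D \<inter> V) f"
  shows "continuous_on D f"
proof -
  have "(f \<longlongrightarrow> f x) (at x within D)" if x: "x \<in> D" for x
  proof -
    obtain V where V: "open V" "x \<in> V" "continuous_on (D \<inter> V) f" using assms x by blast
    have "(f \<longlongrightarrow> f x) (at x within D \<inter> V)"
      using V(3) x V(2) unfolding continuous_on_def by blast
    moreover have "at x within D = at x within D \<inter> V"
      by (rule at_within_nhd[OF V(2,1)]) auto
    ultimately show ?thesis by simp
  qed
  then show ?thesis unfolding continuous_on_def by blast
qed

locale flowsec2 = flowsec \<psi> S for \<psi> :: "real \<Rightarrow> 'm::topological_space \<Rightarrow> 'm" and S +
  fixes \<phi> :: "real \<Rightarrow> 'm \<Rightarrow> 'm"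
  assumes g0: "\<And>x. \<phi> 0 x = x" and gadd: "\<And>s t x. \<phi> (s+t) x = \<phi> s (\<phi> t x)"
  and gcont: "continuous_on UNIV (\<lambda>(t,x). \<phi> t x)"
  and comm: "\<And>s t x. \<psi> s (\<phi> t x) = \<phi> t (\<psi> s x)"
begin

lemma gcomp:
  assumes "continuous_on D a" "continuous_on D b"
  shows "continuous_on D (\<lambda>z. \<phi> (a z) (b z))"
proof -
  have "continuous_on D ((\<lambda>(t,x). \<phi> t x) \<circ> (\<lambda>z. (a z, b z)))"
    by (rule continuous_on_compose[OF continuous_on_Pair[OF assms]])
       (rule continuous_on_subset[OF gcont], simp)
  then show ?thesis by (simp add: o_def)
qed

lemma lift_interval:
  assumes \<sigma>: "\<sigma> \<in> S" and s: "s \<ge> 0"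
  shows "\<exists>w. continuous_on {0..s} w \<and> w 0 = 0 \<and> (\<forall>t\<in>{0..s}. \<psi> (- w t) (\<phi> t \<sigma>) \<in> S)"
proof (rule ccontr)
  assume ns: "\<not> ?thesis"
  define E where "E = {s. s \<ge> 0 \<and> (\<exists>w. continuous_on {0..s} w \<and> w 0 = 0 \<and> (\<forall>t\<in>{0..s}. \<psi> (- w t) (\<phi> t \<sigma>) \<in> S))}"
  have E0: "0 \<in> E" unfolding E_def mem_Collect_eq
  proof (intro conjI exI[of _ "\<lambda>_. 0"] ballI)
    show "continuous_on {0..0} (\<lambda>_. 0::real)" by (rule continuous_on_const)
    fix t assume "t \<in> {0..(0::real)}"
    then have "t = 0" by simp
    then show "\<psi> (- 0) (\<phi> t \<sigma>) \<in> S" by (simp add: f0 g0 \<sigma>)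
  qed simp_all
  have down: "s' \<in> E" if hs: "s'' \<in> E" and h2: "0 \<le> s'" and h3: "s' \<le> s''" for s' s''
  proof -
    from hs have "\<exists>w. continuous_on {0..s''} w \<and> w 0 = 0 \<and> (\<forall>t\<in>{0..s''}. \<psi> (- w t) (\<phi> t \<sigma>) \<in> S)"
      unfolding E_def by simp
    then obtain w where w0: "continuous_on {0..s''} w \<and> w 0 = 0 \<and> (\<forall>t\<in>{0..s''}. \<psi> (- w t) (\<phi> t \<sigma>) \<in> S)" ..
    note w = conjunct1[OF w0] conjunct1[OF conjunct2[OF w0]] conjunct2[OF conjunct2[OF w0]]
    show ?thesis unfolding E_def mem_Collect_eq
    proof (intro conjI exI[of _ w] ballI)
      show "0 \<le> s'" by fact
      show "continuous_on {0..s'} w" by (rule continuous_on_subset[OF w(1)]) (use h3 in auto)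
      show "w 0 = 0" by fact
      fix t assume "t \<in> {0..s'}" then show "\<psi> (- w t) (\<phi> t \<sigma>) \<in> S" using w(3) h3 by auto
    qed
  qed
  have sE: "s \<notin> E" using ns s unfolding E_def by blast
  have Eb: "\<forall>t\<in>E. t \<le> s" using down sE s by (meson linear)
  have bdd: "bdd_above E" using Eb by (auto intro: bdd_aboveI)
  define S0 where "S0 = Sup E"
  have S0ge: "0 \<le> S0" unfolding S0_def by (rule cSup_upper[OF E0 bdd])
  obtain u where u: "u > 0" "\<psi> u (\<phi> S0 \<sigma>) \<in> S" using fwd by blast
  have Qc: "continuous_on UNIV (\<lambda>t. \<phi> t \<sigma>)" by (intro gcomp continuous_on_id continuous_on_const)
  obtain N c where N: "open N" "S0 \<in> N" "continuous_on (UNIV \<inter> N) c" "c S0 = -u"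
      "\<forall>z\<in>UNIV \<inter> N. \<psi> (- c z) (\<phi> z \<sigma>) \<in> S"
    using local_lift[OF Qc, of S0 "-u"] u by auto
  obtain \<epsilon> where \<epsilon>: "\<epsilon> > 0" "ball S0 \<epsilon> \<subseteq> N" using openE[OF N(1,2)] by blast
  have "S0 - \<epsilon> < Sup E" using \<epsilon> S0_def by simp
  then obtain t1 where t1: "t1 \<in> E" "S0 - \<epsilon> < t1" using less_cSupE E0 by blast
  have t1le: "t1 \<le> S0" unfolding S0_def by (rule cSup_upper[OF t1(1) bdd])
  have t1ge: "t1 \<ge> 0" using t1(1) unfolding E_def by simp
  from t1(1) have "\<exists>w. continuous_on {0..t1} w \<and> w 0 = 0 \<and> (\<forall>t\<in>{0..t1}. \<psi> (- w t) (\<phi> t \<sigma>) \<in> S)"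
    unfolding E_def by simp
  then obtain w1 where w10: "continuous_on {0..t1} w1 \<and> w1 0 = 0 \<and> (\<forall>t\<in>{0..t1}. \<psi> (- w1 t) (\<phi> t \<sigma>) \<in> S)" ..
  note w1 = conjunct1[OF w10] conjunct1[OF conjunct2[OF w10]] conjunct2[OF conjunct2[OF w10]]
  define Y where "Y t = \<psi> (- c t) (\<phi> t \<sigma>)" for t
  have t1b: "t1 \<in> ball S0 \<epsilon>" using t1 t1le \<epsilon> by (auto simp: dist_real_def)
  have YS: "Y t \<in> S" if "t \<in> ball S0 \<epsilon>" for t using N(5) \<epsilon>(2) that Y_def by auto
  define d where "d = c t1 - w1 t1"
  have "\<psi> d (Y t1) \<in> S" using w1(3) t1ge by (simp add: Y_def d_def ff)
  then obtain cc where cc: "continuous_on S cc" "cc (Y t1) = d" "\<forall>z\<in>S. \<psi> (cc z) z \<in> S"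
    using any_hit[OF YS[OF t1b]] by blast
  define w2 where "w2 t = c t - cc (Y t)" for t
  have cb: "continuous_on (ball S0 \<epsilon>) c" using N(3) \<epsilon>(2) by (auto intro: continuous_on_subset)
  have Yc: "continuous_on (ball S0 \<epsilon>) Y" unfolding Y_def
    by (intro cont_comp gcomp continuous_on_minus cb continuous_on_id continuous_on_const)
  have w2c: "continuous_on (ball S0 \<epsilon>) w2" unfolding w2_def
    by (intro continuous_on_diff cb continuous_on_compose2[OF cc(1) Yc]) (use YS in auto)
  have w2h: "\<psi> (- w2 t) (\<phi> t \<sigma>) \<in> S" if "t \<in> ball S0 \<epsilon>" for t
  proof -
    have "\<psi> (- w2 t) (\<phi> t \<sigma>) = \<psi> (cc (Y t)) (Y t)" by (simp add: w2_def Y_def ff)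
    then show ?thesis using cc(3) YS[OF that] by simp
  qed
  have w21: "w2 t1 = w1 t1" using cc(2) d_def w2_def by simp
  define W where "W t = (if t \<le> t1 then w1 t else w2 t)" for t
  let ?s2 = "S0 + \<epsilon>/2"
  have "continuous_on {0..?s2} (\<lambda>t. if id t \<le> t1 then w1 t else w2 t)"
  proof (rule continuous_on_cases_le)
    show "continuous_on {t \<in> {0..?s2}. id t \<le> t1} w1" by (rule continuous_on_subset[OF w1(1)]) auto
    show "continuous_on {t \<in> {0..?s2}. t1 \<le> id t} w2"
      by (rule continuous_on_subset[OF w2c]) (use t1 \<epsilon> in \<open>auto simp: dist_real_def\<close>)
  qed (auto simp: w21 continuous_on_id)
  then have Wc: "continuous_on {0..?s2} W" unfolding W_def by simp
  have "?s2 \<in> E" unfolding E_def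
  proof (intro CollectI conjI exI[of _ W])
    show "0 \<le> ?s2" using S0ge \<epsilon> by simp
    show "W 0 = 0" using t1ge w1(2) W_def by simp
    show "\<forall>t\<in>{0..?s2}. \<psi> (- W t) (\<phi> t \<sigma>) \<in> S"
    proof
      fix t assume t: "t \<in> {0..?s2}"
      show "\<psi> (- W t) (\<phi> t \<sigma>) \<in> S"
      proof (cases "t \<le> t1")
        case True then show ?thesis using w1(3) t W_def by auto
      next
        case False
        then have "t \<in> ball S0 \<epsilon>" using t t1 \<epsilon> by (auto simp: dist_real_def)
        then show ?thesis using w2h False W_def by auto
      qed
    qed
  qed (rule Wc)
  then have "?s2 \<le> S0" unfolding S0_def by (rule cSup_upper[OF _ bdd])
  then show False using \<epsilon> by simp
qed


definition L where
  "L \<sigma> t = (SOME w. continuous_on {0..t} w \<and> w 0 = 0 \<and> (\<forall>u\<in>{0..t}. \<psi> (- w u) (\<phi> u \<sigma>) \<in> S)) t"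

lemma L_agree:
  assumes \<sigma>: "\<sigma> \<in> S" and wc: "continuous_on {0..s} w" and w0: "w 0 = 0"
    and wl: "\<forall>u\<in>{0..s}. \<psi> (- w u) (\<phi> u \<sigma>) \<in> S" and t: "t \<in> {0..s}"
  shows "L \<sigma> t = w t"
proof -
  define P where "P = (\<lambda>w. continuous_on {0..t} w \<and> w 0 = 0 \<and> (\<forall>u\<in>{0..t}. \<psi> (- w u) (\<phi> u \<sigma>) \<in> S))"
  have ex: "\<exists>w. P w" unfolding P_def using lift_interval[OF \<sigma>, of t] t by simp
  have "P (SOME w. P w)" using someI_ex[OF ex] .
  then have v: "continuous_on {0..t} (SOME w. P w)" "(SOME w. P w) 0 = 0"
    "\<forall>u\<in>{0..t}. \<psi> (- (SOME w. P w) u) (\<phi> u \<sigma>) \<in> S" unfolding P_def by simp_all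
  have Lt: "L \<sigma> t = (SOME w. P w) t" unfolding L_def P_def ..
  have Qc: "continuous_on {0..t} (\<lambda>u. \<phi> u \<sigma>)" by (intro gcomp continuous_on_id continuous_on_const)
  have wc': "continuous_on {0..t} w" by (rule continuous_on_subset[OF wc]) (use t in auto)
  have wl': "\<forall>u\<in>{0..t}. \<psi> (- w u) (\<phi> u \<sigma>) \<in> S" using wl t by auto
  have "\<forall>z\<in>{0..t}. (SOME w. P w) z = w z"
    by (rule lift_unique[OF connected_Icc Qc v(1) wc' v(3) wl', of 0]) (use t v(2) w0 in auto)
  then show ?thesis using Lt t by auto
qed

lemma L_props:
  assumes \<sigma>: "\<sigma> \<in> S"
  shows "L \<sigma> 0 = 0" "\<And>t. t \<ge> 0 \<Longrightarrow> \<psi> (- L \<sigma> t) (\<phi> t \<sigma>) \<in> S"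
    "\<And>s. s \<ge> 0 \<Longrightarrow> continuous_on {0..s} (L \<sigma>)" "continuous_on {0..} (L \<sigma>)"
proof -
  have ex: "\<exists>w. continuous_on {0..s} w \<and> w 0 = 0 \<and> (\<forall>u\<in>{0..s}. \<psi> (- w u) (\<phi> u \<sigma>) \<in> S)"
    if "s \<ge> 0" for s using lift_interval[OF \<sigma> that] .
  have cs: "continuous_on {0..s} (L \<sigma>)" if s: "s \<ge> 0" for s
  proof -
    obtain w where w0: "continuous_on {0..s} w \<and> w 0 = 0 \<and> (\<forall>u\<in>{0..s}. \<psi> (- w u) (\<phi> u \<sigma>) \<in> S)"
      using ex[OF s] ..
    note w = conjunct1[OF w0] conjunct1[OF conjunct2[OF w0]] conjunct2[OF conjunct2[OF w0]]
    show ?thesis by (rule continuous_on_eq[OF w(1)]) (use L_agree[OF \<sigma> w] in auto)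
  qed
  then show "\<And>s. s \<ge> 0 \<Longrightarrow> continuous_on {0..s} (L \<sigma>)" .
  show "\<psi> (- L \<sigma> t) (\<phi> t \<sigma>) \<in> S" if t: "t \<ge> 0" for t
  proof -
    obtain w where w0: "continuous_on {0..t} w \<and> w 0 = 0 \<and> (\<forall>u\<in>{0..t}. \<psi> (- w u) (\<phi> u \<sigma>) \<in> S)"
      using ex[OF t] ..
    note w = conjunct1[OF w0] conjunct1[OF conjunct2[OF w0]] conjunct2[OF conjunct2[OF w0]]
    have "L \<sigma> t = w t" by (rule L_agree[OF \<sigma> w]) (use t in auto)
    then show ?thesis using w(3) t by auto
  qed
  show "L \<sigma> 0 = 0"
  proof -
    obtain w where w0: "continuous_on {0..0} w \<and> w 0 = 0 \<and> (\<forall>u\<in>{0..0}. \<psi> (- w u) (\<phi> u \<sigma>) \<in> S)"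
      using ex[of 0] by auto
    note w = conjunct1[OF w0] conjunct1[OF conjunct2[OF w0]] conjunct2[OF conjunct2[OF w0]]
    have "L \<sigma> 0 = w 0" by (rule L_agree[OF \<sigma> w]) auto
    then show ?thesis using w(2) by simp
  qed
  show "continuous_on {0..} (L \<sigma>)"
  proof (rule cont_from_local)
    fix x :: real assume x: "x \<in> {0..}"
    have "continuous_on ({0..} \<inter> {..<x+1}) (L \<sigma>)"
      by (rule continuous_on_subset[OF cs[of "x+1"]]) (use x in auto)
    then show "\<exists>V. open V \<and> x \<in> V \<and> continuous_on ({0..} \<inter> V) (L \<sigma>)"
      by (intro exI[of _ "{..<x+1}"]) auto
  qed
qed


lemma joint_local:
  assumes \<sigma>0: "\<sigma>0 \<in> S" and s: "s \<ge> 0"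
  shows "\<exists>N. open N \<and> \<sigma>0 \<in> N \<and> continuous_on ((S \<inter> N) \<times> {0..s}) (\<lambda>p. L (fst p) (snd p))"
proof (rule ccontr)
  assume ns: "\<not> ?thesis"
  define Lf where "Lf = (\<lambda>p. L (fst p) (snd p))"
  define E where "E = {s. s \<ge> 0 \<and> (\<exists>N. open N \<and> \<sigma>0 \<in> N \<and> continuous_on ((S \<inter> N) \<times> {0..s}) Lf)}"
  have E0: "0 \<in> E" unfolding E_def mem_Collect_eq
  proof (intro conjI exI[of _ UNIV])
    show "continuous_on ((S \<inter> UNIV) \<times> {0..0}) Lf"
      by (rule continuous_on_eq[OF continuous_on_const[of _ 0]]) (auto simp: Lf_def L_props)
  qed auto
  have down: "s' \<in> E" if hs: "s'' \<in> E" and h2: "0 \<le> s'" and h3: "s' \<le> s''" for s' s''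
  proof -
    from hs have "\<exists>N. open N \<and> \<sigma>0 \<in> N \<and> continuous_on ((S \<inter> N) \<times> {0..s''}) Lf"
      unfolding E_def by simp
    then obtain N where N0: "open N \<and> \<sigma>0 \<in> N \<and> continuous_on ((S \<inter> N) \<times> {0..s''}) Lf" ..
    show ?thesis unfolding E_def mem_Collect_eq
    proof (intro conjI exI[of _ N])
      show "continuous_on ((S \<inter> N) \<times> {0..s'}) Lf"
        by (rule continuous_on_subset[OF conjunct2[OF conjunct2[OF N0]]]) (use h3 in auto)
    qed (use N0 h2 in auto)
  qed
  have sE: "s \<notin> E" using ns s unfolding E_def Lf_def by blast
  have Eb: "\<forall>t\<in>E. t \<le> s" using down sE s by (meson linear)
  have bdd: "bdd_above E" using Eb by (auto intro: bdd_aboveI)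
  define S0 where "S0 = Sup E"
  have S0ge: "0 \<le> S0" unfolding S0_def by (rule cSup_upper[OF E0 bdd])
  define Q where "Q = (\<lambda>p::'m\<times>real. \<phi> (snd p) (fst p))"
  have Qc: "continuous_on UNIV Q" unfolding Q_def by (intro gcomp continuous_on_fst continuous_on_snd continuous_on_id)
  have hit0: "\<psi> (- L \<sigma>0 S0) (Q (\<sigma>0, S0)) \<in> S" using L_props(2)[OF \<sigma>0 S0ge] Q_def by simp
  obtain N' c where N': "open N'" "(\<sigma>0, S0) \<in> N'" "continuous_on (UNIV \<inter> N') c" "c (\<sigma>0, S0) = L \<sigma>0 S0"
      "\<forall>z\<in>UNIV \<inter> N'. \<psi> (- c z) (Q z) \<in> S"
    using local_lift[OF Qc _ hit0] by blast
  obtain A B where AB: "open A" "open B" "(\<sigma>0, S0) \<in> A \<times> B" "A \<times> B \<subseteq> N'"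
    using open_prod_elim[OF N'(1,2)] by metis
  have cAB: "continuous_on (A \<times> B) c" using N'(3) AB(4) by (auto intro: continuous_on_subset)
  have hAB: "\<psi> (- c (\<sigma>, t)) (\<phi> t \<sigma>) \<in> S" if "\<sigma> \<in> A" "t \<in> B" for \<sigma> t
  proof -
    have "(\<sigma>, t) \<in> UNIV \<inter> N'" using that AB(4) by blast
    with N'(5) have "\<psi> (- c (\<sigma>, t)) (Q (\<sigma>, t)) \<in> S" by blast
    then show ?thesis by (simp add: Q_def)
  qed
  obtain \<epsilon> where \<epsilon>: "\<epsilon> > 0" "ball S0 \<epsilon> \<subseteq> B" using openE[OF AB(2)] AB(3) by blast
  have "S0 - \<epsilon> < Sup E" using \<epsilon> S0_def by simp
  then obtain t1 where t1: "t1 \<in> E" "S0 - \<epsilon> < t1" using less_cSupE E0 by blast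
  have t1le: "t1 \<le> S0" unfolding S0_def by (rule cSup_upper[OF t1(1) bdd])
  have t1ge: "t1 \<ge> 0" using t1(1) unfolding E_def by simp
  from t1(1) have "\<exists>N. open N \<and> \<sigma>0 \<in> N \<and> continuous_on ((S \<inter> N) \<times> {0..t1}) Lf"
    unfolding E_def by simp
  then obtain N1 where N10: "open N1 \<and> \<sigma>0 \<in> N1 \<and> continuous_on ((S \<inter> N1) \<times> {0..t1}) Lf" ..
  note N1 = conjunct1[OF N10] conjunct1[OF conjunct2[OF N10]] conjunct2[OF conjunct2[OF N10]]
  define J where "J = {0..} \<inter> {S0 - \<epsilon><..<S0 + \<epsilon>}"
  have Jc: "connected J" unfolding J_def
    by (intro convex_connected convex_Int convex_real_interval)
  have JB: "J \<subseteq> B"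
  proof
    fix x assume "x \<in> J"
    then have "x \<in> ball S0 \<epsilon>" unfolding J_def by (auto simp: dist_real_def abs_less_iff)
    then show "x \<in> B" using \<epsilon>(2) by blast
  qed
  have t1J: "t1 \<in> J" using t1 t1le t1ge \<epsilon> J_def by auto
  have S0J: "S0 \<in> J" using S0ge \<epsilon> J_def by auto
  have \<sigma>0A: "\<sigma>0 \<in> A" using AB(3) by auto
  have c_cont_t: "continuous_on J (\<lambda>t. c (\<sigma>, t))" if "\<sigma> \<in> A" for \<sigma>
    by (rule continuous_on_compose2[OF cAB]) (use that JB in \<open>auto intro!: continuous_intros\<close>)
  have claim_t: "\<forall>t\<in>J. c (\<sigma>, t) = L \<sigma> t" if \<sigma>: "\<sigma> \<in> S" "\<sigma> \<in> A" and t0: "t0 \<in> J" and eq: "c (\<sigma>, t0) = L \<sigma> t0" for \<sigma> t0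
  proof (rule lift_unique[where D=J and Q="\<lambda>t. \<phi> t \<sigma>" and wa="\<lambda>t. c (\<sigma>, t)" and wb="L \<sigma>" and za=t0])
    show "connected J" by (rule Jc)
    show "continuous_on J (\<lambda>t. c (\<sigma>, t))" by (rule c_cont_t[OF \<sigma>(2)])
    show "t0 \<in> J" by (rule t0)
    show "c (\<sigma>, t0) = L \<sigma> t0" by (rule eq)
    show "continuous_on J (\<lambda>t. \<phi> t \<sigma>)" by (intro gcomp continuous_on_id continuous_on_const)
    show "continuous_on J (L \<sigma>)" by (rule continuous_on_subset[OF L_props(4)[OF \<sigma>(1)]]) (auto simp: J_def)
    show "\<forall>z\<in>J. \<psi> (- c (\<sigma>, z)) (\<phi> z \<sigma>) \<in> S" using hAB \<sigma>(2) JB by auto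
    show "\<forall>z\<in>J. \<psi> (- L \<sigma> z) (\<phi> z \<sigma>) \<in> S" using L_props(2)[OF \<sigma>(1)] by (auto simp: J_def)
  qed
  have cl1: "\<forall>t\<in>J. c (\<sigma>0, t) = L \<sigma>0 t"
    by (rule claim_t[OF \<sigma>0 \<sigma>0A S0J]) (use N'(4) in simp)
  define D where "D = S \<inter> N1 \<inter> A"
  have Lt1: "continuous_on D (\<lambda>\<sigma>. L \<sigma> t1)"
  proof -
    have "continuous_on D (\<lambda>\<sigma>. Lf (\<sigma>, t1))"
      by (rule continuous_on_compose2[OF N1(3)]) (use t1ge in \<open>auto simp: D_def intro!: continuous_intros\<close>)
    then show ?thesis by (simp add: Lf_def)
  qed
  have ct1: "continuous_on D (\<lambda>\<sigma>. c (\<sigma>, t1))"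
    by (rule continuous_on_compose2[OF cAB]) (use t1J JB in \<open>auto simp: D_def intro!: continuous_intros\<close>)
  obtain N2 where N2: "open N2" "\<sigma>0 \<in> N2" "\<forall>\<sigma>\<in>D \<inter> N2. c (\<sigma>, t1) = L \<sigma> t1"
  proof -
    have "\<exists>N. open N \<and> \<sigma>0 \<in> N \<and> (\<forall>\<sigma>\<in>D \<inter> N. c (\<sigma>, t1) = L \<sigma> t1)"
    proof (rule local_agree[OF _ ct1 Lt1])
      show "continuous_on D (\<lambda>\<sigma>. \<phi> t1 \<sigma>)" by (intro gcomp continuous_on_id continuous_on_const)
      show "\<forall>z\<in>D. \<psi> (- c (z, t1)) (\<phi> t1 z) \<in> S" using hAB t1J JB D_def by auto
      show "\<forall>z\<in>D. \<psi> (- L z t1) (\<phi> t1 z) \<in> S" using L_props(2) t1ge D_def by auto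
      show "\<sigma>0 \<in> D" using \<sigma>0 N1 \<sigma>0A D_def by auto
      show "c (\<sigma>0, t1) = L \<sigma>0 t1" using cl1 t1J by auto
    qed
    then show ?thesis using that by blast
  qed
  define N where "N = N1 \<inter> A \<inter> N2"
  have cl3: "c (\<sigma>, t) = L \<sigma> t" if "\<sigma> \<in> S \<inter> N" "t \<in> J" for \<sigma> t
    using claim_t[of \<sigma> t1] that t1J N2(3) unfolding N_def D_def by auto
  let ?s2 = "S0 + \<epsilon>/2"
  define G where "G = (S \<inter> N) \<times> {0..?s2}"
  have "continuous_on G (\<lambda>p. if snd p \<le> t1 then Lf p else c p)"
  proof (rule continuous_on_cases_le)
    show "continuous_on {p \<in> G. snd p \<le> t1} Lf"
      by (rule continuous_on_subset[OF N1(3)]) (auto simp: G_def N_def)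
    show "continuous_on {p \<in> G. t1 \<le> snd p} c"
    proof (rule continuous_on_subset[OF cAB])
      show "{p \<in> G. t1 \<le> snd p} \<subseteq> A \<times> B"
      proof
        fix p assume p: "p \<in> {p \<in> G. t1 \<le> snd p}"
        then have "snd p \<in> J" using t1 \<epsilon> S0ge unfolding G_def J_def by auto
        then show "p \<in> A \<times> B" using p JB unfolding G_def N_def by (auto simp: mem_Times_iff)
      qed
    qed
    show "continuous_on G snd" by (rule continuous_on_snd[OF continuous_on_id])
    fix p assume p: "p \<in> G" "snd p = t1"
    then have "fst p \<in> S \<inter> N" using G_def by (auto simp: mem_Times_iff)
    then show "Lf p = c p" using cl3[of "fst p" t1] t1J p(2) Lf_def by (metis prod.collapse)
  qed
  then have "continuous_on G Lf"
  proof (rule continuous_on_eq)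
    fix p assume p: "p \<in> G"
    show "(if snd p \<le> t1 then Lf p else c p) = Lf p"
    proof (cases "snd p \<le> t1")
      case False
      then have "snd p \<in> J" using p t1 \<epsilon> S0ge unfolding G_def J_def by (auto simp: mem_Times_iff)
      moreover have "fst p \<in> S \<inter> N" using p G_def by (auto simp: mem_Times_iff)
      ultimately show ?thesis using cl3[of "fst p" "snd p"] False Lf_def by (metis prod.collapse)
    qed simp
  qed
  moreover have "open N" "\<sigma>0 \<in> N" using N1 AB(1) \<sigma>0A N2 N_def by auto
  ultimately have "?s2 \<in> E" unfolding E_def G_def using S0ge \<epsilon> by auto
  then have "?s2 \<le> S0" unfolding S0_def by (rule cSup_upper[OF _ bdd])
  then show False using \<epsilon> by simp
qed

lemma joint_cont: "continuous_on (S \<times> {0..}) (\<lambda>p. L (fst p) (snd p))"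
proof (rule cont_from_local)
  fix p :: "'m \<times> real" assume p: "p \<in> S \<times> {0..}"
  obtain N where N0: "open N \<and> fst p \<in> N \<and> continuous_on ((S \<inter> N) \<times> {0..snd p + 1}) (\<lambda>p. L (fst p) (snd p))"
    using joint_local[of "fst p" "snd p + 1"] p by (auto simp: mem_Times_iff)
  show "\<exists>V. open V \<and> p \<in> V \<and> continuous_on (S \<times> {0..} \<inter> V) (\<lambda>p. L (fst p) (snd p))"
  proof (intro exI[of _ "N \<times> {..<snd p + 1}"] conjI)
    show "open (N \<times> {..<snd p + 1})" using N0 by (auto intro: open_Times)
    show "p \<in> N \<times> {..<snd p + 1}" using N0 by (auto simp: mem_Times_iff)
    show "continuous_on (S \<times> {0..} \<inter> N \<times> {..<snd p + 1}) (\<lambda>p. L (fst p) (snd p))"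
      by (rule continuous_on_subset[OF conjunct2[OF conjunct2[OF N0]]]) auto
  qed
qed


lemma rev2: "flowsec2 \<psi> S (\<lambda>t. \<phi> (-t))"
proof -
  have c: "continuous_on UNIV (\<lambda>(t, x). \<phi> (- t) x)"
  proof -
    have "continuous_on UNIV (\<lambda>p::real\<times>'m. \<phi> (- fst p) (snd p))"
      by (intro gcomp continuous_on_minus continuous_on_fst continuous_on_snd continuous_on_id)
    then show ?thesis by (simp add: case_prod_unfold)
  qed
  show ?thesis
    unfolding flowsec2_def flowsec2_axioms_def
  proof (intro conjI allI flowsec_axioms)
    show "\<phi> (- 0) x = x" for x by (simp add: g0)
    show "\<phi> (- (s + t)) x = \<phi> (- s) (\<phi> (- t) x)" for s t x using gadd[of "-s" "-t" x] by simp
    show "\<psi> s (\<phi> (- t) x) = \<phi> (- t) (\<psi> s x)" for s t x by (rule comm)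
  qed (rule c)
qed

lemma main: "\<exists>(k :: real \<Rightarrow> 'm \<Rightarrow> 'm) (\<omega> :: 'm \<Rightarrow> real \<Rightarrow> real).
           (\<forall>t. \<forall>\<sigma>\<in>S. k t \<sigma> \<in> S)
         \<and> continuous_on (UNIV \<times> S) (\<lambda>(t,\<sigma>). k t \<sigma>)
         \<and> continuous_on (S \<times> UNIV) (\<lambda>(\<sigma>,t). \<omega> \<sigma> t)
         \<and> (\<forall>t \<tau>. \<forall>\<sigma>\<in>S. \<psi> (\<tau> + \<omega> \<sigma> t) (k t \<sigma>) = \<phi> t (\<psi> \<tau> \<sigma>))
         \<and> (\<forall>\<sigma>\<in>S. k 0 \<sigma> = \<sigma> \<and> \<omega> \<sigma> 0 = 0)
         \<and> (\<forall>t s. \<forall>\<sigma>\<in>S. k (t + s) \<sigma> = k t (k s \<sigma>)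
                         \<and> \<omega> \<sigma> (t + s) = \<omega> \<sigma> t + \<omega> (k t \<sigma>) s)"
proof -
  interpret R: flowsec2 \<psi> S "\<lambda>t. \<phi> (-t)" by (rule rev2)
  define \<omega> where "\<omega> \<sigma> t = (if t \<le> 0 then R.L \<sigma> (-t) else L \<sigma> t)" for \<sigma> t
  define k where "k t \<sigma> = \<psi> (- \<omega> \<sigma> t) (\<phi> t \<sigma>)" for t \<sigma>
  have hit: "\<psi> (- \<omega> \<sigma> t) (\<phi> t \<sigma>) \<in> S" if \<sigma>: "\<sigma> \<in> S" for \<sigma> t
  proof (cases "t \<le> 0")
    case True
    have "\<psi> (- R.L \<sigma> (-t)) (\<phi> (- (-t)) \<sigma>) \<in> S" using R.L_props(2)[OF \<sigma>, of "-t"] True by simp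
    then show ?thesis using True \<omega>_def by simp
  next
    case False
    then show ?thesis using L_props(2)[OF \<sigma>, of t] \<omega>_def by simp
  qed
  have w0: "\<omega> \<sigma> 0 = 0" if "\<sigma> \<in> S" for \<sigma> using R.L_props(1)[OF that] \<omega>_def by simp
  have wc: "continuous_on (S \<times> UNIV) (\<lambda>p. \<omega> (fst p) (snd p))"
  proof -
    have "continuous_on (S \<times> UNIV) (\<lambda>p. if snd p \<le> 0 then R.L (fst p) (- snd p) else L (fst p) (snd p))"
    proof (rule continuous_on_cases_le)
      show "continuous_on {p \<in> S \<times> UNIV. snd p \<le> 0} (\<lambda>p. R.L (fst p) (- snd p))"
      proof -
        have "continuous_on {p \<in> S \<times> UNIV. snd p \<le> 0} (\<lambda>p. (\<lambda>q. R.L (fst q) (snd q)) (fst p, - snd p))"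
          by (rule continuous_on_compose2[OF R.joint_cont]) (auto intro!: continuous_intros simp: mem_Times_iff)
        then show ?thesis by simp
      qed
      show "continuous_on {p \<in> S \<times> UNIV. 0 \<le> snd p} (\<lambda>p. L (fst p) (snd p))"
        by (rule continuous_on_subset[OF joint_cont]) (auto simp: mem_Times_iff)
      show "continuous_on (S \<times> UNIV) snd" by (rule continuous_on_snd[OF continuous_on_id])
      fix p :: "'m \<times> real" assume "p \<in> S \<times> UNIV" "snd p = 0"
      then show "R.L (fst p) (- snd p) = L (fst p) (snd p)"
        using R.L_props(1) L_props(1) by (auto simp: mem_Times_iff)
    qed
    then show ?thesis by (simp add: \<omega>_def)
  qed
  have w\<sigma>: "continuous_on UNIV (\<omega> \<sigma>)" if "\<sigma> \<in> S" for \<sigma>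
  proof -
    have "continuous_on UNIV (\<lambda>t. (\<lambda>p. \<omega> (fst p) (snd p)) (\<sigma>, t))"
      by (rule continuous_on_compose2[OF wc]) (use that in \<open>auto intro!: continuous_intros\<close>)
    then show ?thesis by simp
  qed
  have kS: "k t \<sigma> \<in> S" if "\<sigma> \<in> S" for t \<sigma> using hit[OF that] k_def by simp
  have coc: "\<omega> \<sigma> (t + u) = \<omega> \<sigma> t + \<omega> (k t \<sigma>) u \<and> k (t + u) \<sigma> = k u (k t \<sigma>)" if \<sigma>: "\<sigma> \<in> S" for \<sigma> t u
  proof -
    define y where "y = k t \<sigma>"
    have yS: "y \<in> S" using kS[OF \<sigma>] y_def by simp
    have eqn: "\<psi> (- (\<omega> \<sigma> t + \<omega> y v)) (\<phi> (t + v) \<sigma>) = \<psi> (- \<omega> y v) (\<phi> v y)" for v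
    proof -
      have "\<phi> (t + v) \<sigma> = \<phi> v (\<phi> t \<sigma>)" using gadd[of v t \<sigma>] by (simp add: add.commute)
      then have "\<psi> (- (\<omega> \<sigma> t + \<omega> y v)) (\<phi> (t + v) \<sigma>) = \<psi> (- \<omega> y v) (\<psi> (- \<omega> \<sigma> t) (\<phi> v (\<phi> t \<sigma>)))"
        by (simp add: ff add.commute)
      also have "\<dots> = \<psi> (- \<omega> y v) (\<phi> v y)" by (simp add: y_def k_def comm)
      finally show ?thesis .
    qed
    have all: "\<forall>v\<in>UNIV. \<omega> \<sigma> (t + v) = \<omega> \<sigma> t + \<omega> y v"
    proof (rule lift_unique[where D=UNIV and Q="\<lambda>v. \<phi> (t + v) \<sigma>" and wa="\<lambda>v. \<omega> \<sigma> (t + v)" and wb="\<lambda>v. \<omega> \<sigma> t + \<omega> y v" and za=0])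
      show "connected (UNIV :: real set)" by simp
      show "continuous_on UNIV (\<lambda>v. \<phi> (t + v) \<sigma>)" by (intro gcomp continuous_intros)
      show "continuous_on UNIV (\<lambda>v. \<omega> \<sigma> (t + v))"
        by (rule continuous_on_compose2[OF w\<sigma>[OF \<sigma>]]) (auto intro!: continuous_intros)
      show "continuous_on UNIV (\<lambda>v. \<omega> \<sigma> t + \<omega> y v)" by (intro continuous_on_add continuous_on_const w\<sigma> yS)
      show "\<forall>z\<in>UNIV. \<psi> (- \<omega> \<sigma> (t + z)) (\<phi> (t + z) \<sigma>) \<in> S" using hit[OF \<sigma>] by blast
      show "\<forall>z\<in>UNIV. \<psi> (- (\<omega> \<sigma> t + \<omega> y z)) (\<phi> (t + z) \<sigma>) \<in> S" using hit[OF yS] eqn by simp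
      show "(0::real) \<in> UNIV" by simp
      show "\<omega> \<sigma> (t + 0) = \<omega> \<sigma> t + \<omega> y 0" using w0[OF yS] by simp
    qed
    then have e1: "\<omega> \<sigma> (t + u) = \<omega> \<sigma> t + \<omega> y u" by simp
    have "k (t + u) \<sigma> = \<psi> (- (\<omega> \<sigma> t + \<omega> y u)) (\<phi> (t + u) \<sigma>)" using e1 k_def by simp
    also have "\<dots> = k u y" using eqn k_def by simp
    finally show ?thesis using e1 y_def by simp
  qed
  show ?thesis
  proof (intro exI[of _ k] exI[of _ \<omega>] conjI allI ballI)
    show "k t \<sigma> \<in> S" if "\<sigma> \<in> S" for t \<sigma> using kS that by blast
    show "continuous_on (UNIV \<times> S) (\<lambda>(t, \<sigma>). k t \<sigma>)"
    proof -
      have "continuous_on (UNIV \<times> S) (\<lambda>p. \<psi> (- (\<lambda>q. \<omega> (fst q) (snd q)) (snd p, fst p)) (\<phi> (fst p) (snd p)))"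
        by (intro cont_comp gcomp continuous_on_minus continuous_on_compose2[OF wc]
            continuous_on_fst continuous_on_snd continuous_on_id continuous_on_Pair)
           (auto simp: mem_Times_iff)
      then show ?thesis by (simp add: case_prod_unfold k_def)
    qed
    show "continuous_on (S \<times> UNIV) (\<lambda>(\<sigma>, t). \<omega> \<sigma> t)" using wc by (simp add: case_prod_unfold)
    show "\<psi> (\<tau> + \<omega> \<sigma> t) (k t \<sigma>) = \<phi> t (\<psi> \<tau> \<sigma>)" for t \<tau> \<sigma>
      by (simp add: k_def ff comm)
    show "k 0 \<sigma> = \<sigma>" if "\<sigma> \<in> S" for \<sigma> using w0[OF that] by (simp add: k_def f0 g0)
    show "\<omega> \<sigma> 0 = 0" if "\<sigma> \<in> S" for \<sigma> using w0[OF that] .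
    show "k (t + s) \<sigma> = k t (k s \<sigma>)" if "\<sigma> \<in> S" for t s \<sigma> using coc[OF that, of s t] by (simp add: add.commute)
    show "\<omega> \<sigma> (t + s) = \<omega> \<sigma> t + \<omega> (k t \<sigma>) s" if "\<sigma> \<in> S" for t s \<sigma> using coc[OF that, of t s] by simp
  qed
qed

end


lemma chart_props:
  fixes U :: "'m::topological_space set" and h :: "'m \<Rightarrow> 'e::euclidean_space"
  assumes "chart U h"
  shows "open U" "open (h ` U)" "continuous_on U h" "continuous_on (h ` U) (inv_into U h)"
    "\<forall>z\<in>U. inv_into U h (h z) = z" "inj_on h U"
  using assms unfolding chart_def homeomorphism_def by (auto intro: inj_on_inverseI)

lemma manifold_closed:
  fixes A :: "('m::topological_space set \<times> ('m \<Rightarrow> real^'n)) set" and \<Sigma> :: "'m set"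
  assumes M: "manifold A" and rc: "relatively_closed \<Sigma>"
  shows "closed \<Sigma>"
  unfolding closed_def
proof (subst open_subopen, intro ballI)
  fix x :: 'm assume x: "x \<in> - \<Sigma>"
  show "\<exists>T. open T \<and> x \<in> T \<and> T \<subseteq> - \<Sigma>"
  proof (rule ccontr)
    assume nT: "\<not> ?thesis"
    have "\<Union>(fst ` A) = UNIV" using M unfolding manifold_def C1_atlas_def by auto
    then obtain U h where Uh: "(U,h) \<in> A" "x \<in> U" by (metis UNIV_I UnionE imageE prod.collapse)
    have "chart U h" using M Uh(1) unfolding manifold_def C1_atlas_def compatible_chart_def by auto
    note ch = chart_props[OF this]
    define V where "V j = U \<inter> h -` ball (h x) (1 / Suc j)" for j :: nat
    have Vo: "open (V j)" for j
      using ch(3) ch(1) unfolding V_def continuous_on_open_vimage[OF ch(1)] by (auto simp: Int_commute)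
    have "\<exists>s. s \<in> V j \<and> s \<in> \<Sigma>" for j
    proof (rule ccontr)
      assume "\<not> (\<exists>s. s \<in> V j \<and> s \<in> \<Sigma>)"
      then have "V j \<subseteq> - \<Sigma>" by auto
      moreover have "x \<in> V j" using Uh(2) V_def by auto
      ultimately show False using nT Vo by blast
    qed
    then obtain s where s: "\<And>j. s j \<in> V j \<and> s j \<in> \<Sigma>" by metis
    have "s \<longlonglongrightarrow> x"
    proof (rule topological_tendstoI)
      fix T assume T: "open T" "x \<in> T"
      define H where "H = h ` U \<inter> inv_into U h -` (T \<inter> U)"
      have Ho: "open H"
        using ch(4) ch(2) T(1) ch(1) unfolding H_def continuous_on_open_vimage[OF ch(2)] by (auto simp: Int_commute)
      have hxH: "h x \<in> H" using H_def Uh(2) ch(5) T by auto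
      obtain r where r: "r > 0" "ball (h x) r \<subseteq> H" using openE[OF Ho hxH] by blast
      obtain N :: nat where N: "inverse (Suc N) < r" using reals_Archimedean[OF r(1)] by auto
      show "\<forall>\<^sub>F j in sequentially. s j \<in> T"
        unfolding eventually_sequentially
      proof (intro exI[of _ N] allI impI)
        fix j assume j: "N \<le> j"
        have sj: "s j \<in> U" "dist (h x) (h (s j)) < 1 / Suc j" using s[of j] V_def by auto
        have "1 / Suc j \<le> inverse (Suc N)" using j by (simp add: divide_simps)
        then have "h (s j) \<in> ball (h x) r" using sj N by (auto simp: dist_commute)
        then have "h (s j) \<in> H" using r by auto
        then have "inv_into U h (h (s j)) \<in> T" unfolding H_def by auto
        then show "s j \<in> T" using ch(5) sj by auto
      qed
    qed
    then have "x \<in> \<Sigma>" using rc s unfolding relatively_closed_def by blast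
    then show False using x by simp
  qed
qed

lemma mono_zero:
  fixes g :: "real \<Rightarrow> 'm::topological_space \<Rightarrow> real"
  assumes X: "open X" "\<sigma>0 \<in> X" and d: "\<delta> > 0"
    and mono: "\<And>x a b. x \<in> X \<Longrightarrow> -\<delta> \<le> a \<Longrightarrow> a < b \<Longrightarrow> b \<le> \<delta> \<Longrightarrow> g a x < g b x"
    and ct: "\<And>x. x \<in> X \<Longrightarrow> continuous_on {-\<delta>..\<delta>} (\<lambda>t. g t x)"
    and cx: "\<And>t. t \<in> {-\<delta>..\<delta>} \<Longrightarrow> continuous_on X (g t)"
    and g0: "g 0 \<sigma>0 = 0"
  shows "\<exists>W \<tau>. open W \<and> \<sigma>0 \<in> W \<and> W \<subseteq> X \<and> continuous_on W \<tau> \<and>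
           (\<forall>x\<in>W. \<bar>\<tau> x\<bar> < \<delta> \<and> g (\<tau> x) x = 0 \<and> (\<forall>t. \<bar>t\<bar> < \<delta> \<and> g t x = 0 \<longrightarrow> t = \<tau> x))"
proof -
  have opn: "open {x\<in>X. g t x \<in> B}" if tt: "t \<in> {-\<delta>..\<delta>}" and oB: "open B" for t B
  proof -
    obtain C where "open C" "C \<inter> X = g t -` B \<inter> X" using cx[OF tt] oB continuous_on_open_invariant by metis
    then have "{x\<in>X. g t x \<in> B} = C \<inter> X" by auto
    then show ?thesis using \<open>open C\<close> X(1) by auto
  qed
  define W where "W = {x\<in>X. g (-\<delta>) x \<in> {..<0}} \<inter> {x\<in>X. g \<delta> x \<in> {0<..}}"
  have Wo: "open W" unfolding W_def using d by (intro open_Int opn) auto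
  have \<sigma>W: "\<sigma>0 \<in> W" unfolding W_def using mono[OF X(2), of "-\<delta>" 0] mono[OF X(2), of 0 \<delta>] d g0 X(2) by auto
  have zero: "\<exists>!t. -\<delta> < t \<and> t < \<delta> \<and> g t x = 0" if x: "x \<in> W" for x
  proof -
    have xX: "x \<in> X" and neg: "g (-\<delta>) x < 0" and pos: "g \<delta> x > 0" using x W_def by auto
    obtain t where t: "-\<delta> \<le> t" "t \<le> \<delta>" "g t x = 0"
      using IVT'[of "\<lambda>t. g t x" "-\<delta>" 0 \<delta>] neg pos d ct[OF xX] by auto
    have t': "-\<delta> < t" "t < \<delta>" using t neg pos by (auto simp: le_less)
    show ?thesis
    proof (rule ex1I[of _ t])
      show "-\<delta> < t \<and> t < \<delta> \<and> g t x = 0" using t t' by auto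
      fix t2 assume t2: "-\<delta> < t2 \<and> t2 < \<delta> \<and> g t2 x = 0"
      show "t2 = t"
      proof (rule ccontr)
        assume "t2 \<noteq> t"
        then consider "t2 < t" | "t < t2" by linarith
        then show False
        proof cases
          case 1 then show False using mono[OF xX, of t2 t] t t2 t' by auto
        next
          case 2 then show False using mono[OF xX, of t t2] t t2 t' by auto
        qed
      qed
    qed
  qed
  define \<tau> where "\<tau> x = (THE t. -\<delta> < t \<and> t < \<delta> \<and> g t x = 0)" for x
  have \<tau>: "-\<delta> < \<tau> x" "\<tau> x < \<delta>" "g (\<tau> x) x = 0" if "x \<in> W" for x
    using theI'[OF zero[OF that]] \<tau>_def by auto
  have \<tau>u: "t = \<tau> x" if "x \<in> W" "-\<delta> < t" "t < \<delta>" "g t x = 0" for x t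
    using the1_equality[OF zero[OF that(1)]] that \<tau>_def by auto
  have tc: "continuous_on W \<tau>"
  proof (rule continuous_on_real_eps)
    fix x0 e assume x0: "x0 \<in> W" and e: "(e::real) > 0"
    define e1 where "e1 = min e (min (\<delta> - \<tau> x0) (\<tau> x0 + \<delta>)) / 2"
    have tb: "-\<delta> < \<tau> x0" "\<tau> x0 < \<delta>" using \<tau>[OF x0] by auto
    have m: "min e (min (\<delta> - \<tau> x0) (\<tau> x0 + \<delta>)) \<le> e"
      "min e (min (\<delta> - \<tau> x0) (\<tau> x0 + \<delta>)) \<le> \<delta> - \<tau> x0"
      "min e (min (\<delta> - \<tau> x0) (\<tau> x0 + \<delta>)) \<le> \<tau> x0 + \<delta>"
      "min e (min (\<delta> - \<tau> x0) (\<tau> x0 + \<delta>)) > 0" using tb e by auto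
    have e1: "e1 > 0" "e1 < e" "-\<delta> < \<tau> x0 - e1" "\<tau> x0 + e1 < \<delta>"
      using m tb e unfolding e1_def by linarith+
    have x0X: "x0 \<in> X" using x0 W_def by auto
    have a: "g (\<tau> x0 - e1) x0 < 0" using mono[OF x0X, of "\<tau> x0 - e1" "\<tau> x0"] \<tau>[OF x0] e1 by auto
    have b: "g (\<tau> x0 + e1) x0 > 0" using mono[OF x0X, of "\<tau> x0" "\<tau> x0 + e1"] \<tau>[OF x0] e1 by auto
    define Aa where "Aa = W \<inter> {x\<in>X. g (\<tau> x0 - e1) x \<in> {..<0}} \<inter> {x\<in>X. g (\<tau> x0 + e1) x \<in> {0<..}}"
    have Ao: "open Aa" unfolding Aa_def using e1 by (intro open_Int Wo opn) auto
    show "\<exists>A. open A \<and> x0 \<in> A \<and> (\<forall>y\<in>W \<inter> A. \<bar>\<tau> y - \<tau> x0\<bar> < e)"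
    proof (intro exI[of _ Aa] conjI ballI)
      show "open Aa" by (rule Ao)
      show "x0 \<in> Aa" unfolding Aa_def using x0 x0X a b by auto
      fix y assume y: "y \<in> W \<inter> Aa"
      then have yX: "y \<in> X" and ya: "g (\<tau> x0 - e1) y < 0" and yb: "g (\<tau> x0 + e1) y > 0"
        and yW: "y \<in> W" unfolding Aa_def by auto
      have "\<tau> x0 - e1 < \<tau> y"
      proof (rule ccontr)
        assume "\<not> ?thesis"
        then have "\<tau> y \<le> \<tau> x0 - e1" by simp
        then have "g (\<tau> y) y \<le> g (\<tau> x0 - e1) y"
          using mono[OF yX, of "\<tau> y" "\<tau> x0 - e1"] \<tau>[OF yW] e1 by (cases "\<tau> y = \<tau> x0 - e1") auto
        then show False using ya \<tau>[OF yW] by simp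
      qed
      moreover have "\<tau> y < \<tau> x0 + e1"
      proof (rule ccontr)
        assume "\<not> ?thesis"
        then have "\<tau> x0 + e1 \<le> \<tau> y" by simp
        then have "g (\<tau> x0 + e1) y \<le> g (\<tau> y) y"
          using mono[OF yX, of "\<tau> x0 + e1" "\<tau> y"] \<tau>[OF yW] e1 by (cases "\<tau> y = \<tau> x0 + e1") auto
        then show False using yb \<tau>[OF yW] by simp
      qed
      ultimately show "\<bar>\<tau> y - \<tau> x0\<bar> < e" using e1 by auto
    qed
  qed
  show ?thesis
  proof (intro exI[of _ W] exI[of _ \<tau>] conjI ballI allI impI)
    fix x assume x: "x \<in> W"
    show "\<bar>\<tau> x\<bar> < \<delta>" "g (\<tau> x) x = 0" using \<tau>[OF x] by auto
    fix t assume "\<bar>t\<bar> < \<delta> \<and> g t x = 0"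
    then show "t = \<tau> x" using \<tau>u[OF x] by (auto simp: abs_less_iff)
  qed (use Wo \<sigma>W tc W_def in auto)
qed


lemma vd_component:
  fixes f :: "real \<Rightarrow> real^'n"
  assumes "(f has_vector_derivative f') (at s)"
  shows "((\<lambda>t. f t $ i) has_real_derivative (f' $ i)) (at s)"
proof -
  have "(f has_derivative (\<lambda>d. d *\<^sub>R f')) (at s)" using assms by (simp add: has_vector_derivative_def)
  then have "((\<lambda>t. f t $ i) has_derivative (\<lambda>d. (d *\<^sub>R f') $ i)) (at s)"
    by (rule bounded_linear.has_derivative[OF bounded_linear_vec_nth])
  moreover have "(\<lambda>d. (d *\<^sub>R f') $ i) = (*) (f' $ i)" by (auto simp: fun_eq_iff)
  ultimately show ?thesis by (simp add: has_field_derivative_def)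
qed

lemma fb_derive:
  fixes A :: "('m::topological_space set \<times> ('m \<Rightarrow> real^'n)) set" and \<psi> :: "real \<Rightarrow> 'm \<Rightarrow> 'm"
    and \<Sigma> :: "'m set"
  assumes M: "manifold A" and Fl: "C1_flow A \<psi>" and T: "transverse_hypersurface A \<psi> \<Sigma>" and \<sigma>0: "\<sigma>0 \<in> \<Sigma>"
  shows "\<exists>W \<delta> \<tau>. open W \<and> \<sigma>0 \<in> W \<and> \<delta> > 0 \<and> continuous_on W \<tau> \<and>
            (\<forall>x\<in>W. \<bar>\<tau> x\<bar> < \<delta> \<and> \<psi> (\<tau> x) x \<in> \<Sigma> \<and> (\<forall>t. \<bar>t\<bar> < \<delta> \<and> \<psi> t x \<in> \<Sigma> \<longrightarrow> t = \<tau> x))"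
proof -
  have ex: "\<exists>U h i. \<sigma>0 \<in> U \<and> compatible_chart A U h \<and> h ` (U \<inter> \<Sigma>) = h ` U \<inter> {y. y $ i = 0} \<and>
        (\<exists>v. ((\<lambda>t. h (\<psi> t \<sigma>0)) has_vector_derivative v) (at 0) \<and> v $ i \<noteq> 0)"
    using bspec[OF T[unfolded transverse_hypersurface_def] \<sigma>0] .
  then obtain U where "\<exists>h i. \<sigma>0 \<in> U \<and> compatible_chart A U h \<and> h ` (U \<inter> \<Sigma>) = h ` U \<inter> {y. y $ i = 0} \<and>
        (\<exists>v. ((\<lambda>t. h (\<psi> t \<sigma>0)) has_vector_derivative v) (at 0) \<and> v $ i \<noteq> 0)" ..
  then obtain h where "\<exists>i. \<sigma>0 \<in> U \<and> compatible_chart A U h \<and> h ` (U \<inter> \<Sigma>) = h ` U \<inter> {y. y $ i = 0} \<and>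
        (\<exists>v. ((\<lambda>t. h (\<psi> t \<sigma>0)) has_vector_derivative v) (at 0) \<and> v $ i \<noteq> 0)" ..
  then obtain i where Uh0: "\<sigma>0 \<in> U \<and> compatible_chart A U h \<and> h ` (U \<inter> \<Sigma>) = h ` U \<inter> {y. y $ i = 0} \<and>
        (\<exists>v. ((\<lambda>t. h (\<psi> t \<sigma>0)) has_vector_derivative v) (at 0) \<and> v $ i \<noteq> 0)" ..
  note Uh = conjunct1[OF Uh0] conjunct1[OF conjunct2[OF Uh0]] conjunct1[OF conjunct2[OF conjunct2[OF Uh0]]]
  obtain v where v0: "((\<lambda>t. h (\<psi> t \<sigma>0)) has_vector_derivative v) (at 0) \<and> v $ i \<noteq> 0"
    using conjunct2[OF conjunct2[OF conjunct2[OF Uh0]]] ..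
  note v = conjunct1[OF v0] conjunct2[OF v0]
  have "\<Union>(fst ` A) = UNIV" using M unfolding manifold_def C1_atlas_def by auto
  then obtain V k where Vk: "(V,k) \<in> A" "\<sigma>0 \<in> V" by (metis UNIV_I UnionE imageE prod.collapse)
  have chV: "chart V k" using M Vk(1) unfolding manifold_def C1_atlas_def compatible_chart_def by auto
  note cV = chart_props[OF chV]
  have chU: "chart U h" using Uh(2) unfolding compatible_chart_def by auto
  note cU = chart_props[OF chU]
  define gk where "gk = inv_into V k"
  have gkk: "gk (k x) = x" if "x \<in> V" for x using cV(5) that gk_def by auto
  have "C1_on (k ` (U \<inter> V)) (h \<circ> inv_into V k)" using Uh(2) Vk(1) unfolding compatible_chart_def by auto
  then obtain G' where G': "\<forall>z\<in>k ` (U \<inter> V). ((h \<circ> gk) has_derivative blinfun_apply (G' z)) (at z)"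
      "continuous_on (k ` (U \<inter> V)) G'" unfolding C1_on_def gk_def by blast
  define G where "G = h \<circ> gk"
  define F0 where "F0 = (\<lambda>(t,y). k (\<psi> t (gk y)))"
  define SF where "SF = {(t, k x) | t x. x \<in> V \<and> \<psi> t x \<in> V}"
  have fl: "\<forall>x. \<psi> 0 x = x" "\<forall>s t x. \<psi> (s + t) x = \<psi> s (\<psi> t x)" "continuous_on UNIV (\<lambda>(t,x). \<psi> t x)"
    and flc: "\<forall>(U,h)\<in>A. \<forall>(V,k)\<in>A. C1_on {(t, h x) | t x. x \<in> U \<and> \<psi> t x \<in> V} (\<lambda>(t,y). k (\<psi> t (inv_into U h y)))"
    using Fl unfolding C1_flow_def by auto
  have "C1_on SF F0" using flc Vk(1) unfolding SF_def F0_def gk_def by fastforce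
  then obtain F' where F': "\<forall>p\<in>SF. (F0 has_derivative blinfun_apply (F' p)) (at p)" "continuous_on SF F'"
    unfolding C1_on_def by blast
  have pc: "continuous_on D (\<lambda>z. \<psi> (a z) (b z))" if "continuous_on D a" "continuous_on D b" for D a b
  proof -
    have "continuous_on D ((\<lambda>(t,x). \<psi> t x) \<circ> (\<lambda>z. (a z, b z)))"
      by (rule continuous_on_compose[OF continuous_on_Pair[OF that]])
         (rule continuous_on_subset[OF fl(3)], simp)
    then show ?thesis by (simp add: o_def)
  qed
  define Ob where "Ob = {p. snd p \<in> V \<and> \<psi> (fst p) (snd p) \<in> U \<inter> V}"
  have Oo: "open Ob"
  proof -
    have "Ob = (UNIV \<times> V) \<inter> (\<lambda>p. \<psi> (fst p) (snd p)) -` (U \<inter> V)" unfolding Ob_def by auto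
    moreover have "continuous_on UNIV (\<lambda>p::real\<times>'m. \<psi> (fst p) (snd p))"
      by (intro pc continuous_on_fst continuous_on_snd continuous_on_id)
    ultimately show ?thesis using cU(1) cV(1) by (auto intro!: open_Int open_Times open_vimage)
  qed
  have \<sigma>Ob: "(0, \<sigma>0) \<in> Ob" unfolding Ob_def using Vk(2) Uh(1) fl(1) by auto
  define Dv where "Dv t x = blinfun_apply (G' (F0 (t, k x))) (blinfun_apply (F' (t, k x)) (1, 0))" for t x
  have SF_in: "(t, k x) \<in> SF" "F0 (t, k x) = k (\<psi> t x)" "F0 (t, k x) \<in> k ` (U \<inter> V)" if "(t, x) \<in> Ob" for t x
    using that unfolding SF_def Ob_def F0_def by (auto simp: gkk)
  have der: "((\<lambda>s. h (\<psi> s x)) has_vector_derivative Dv t x) (at t)" if tx: "(t, x) \<in> Ob" for t x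
  proof -
    note p = SF_in[OF tx]
    have d1: "((\<lambda>s. (s, k x)) has_derivative (\<lambda>d. (d, 0))) (at t)"
      by (rule has_derivative_Pair[OF has_derivative_ident has_derivative_const])
    have d2: "(F0 has_derivative blinfun_apply (F' (t, k x))) (at (t, k x))" using F'(1) p(1) by blast
    have d3: "(G has_derivative blinfun_apply (G' (F0 (t, k x)))) (at (F0 (t, k x)))" using G'(1) p(3) G_def by blast
    have "((\<lambda>s. G (F0 (s, k x))) has_derivative (\<lambda>d. G' (F0 (t, k x)) (F' (t, k x) (d, 0)))) (at t)"
      using has_derivative_compose[OF has_derivative_compose[OF d1 d2] d3] by simp
    moreover have "(\<lambda>d. G' (F0 (t, k x)) (F' (t, k x) (d, 0))) = (\<lambda>d. d *\<^sub>R Dv t x)"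
    proof
      fix d :: real
      have "(d, 0::real^'n) = d *\<^sub>R (1, 0)" by simp
      then show "G' (F0 (t, k x)) (F' (t, k x) (d, 0)) = d *\<^sub>R Dv t x"
        by (simp only: Dv_def blinfun.scaleR_right)
    qed
    ultimately have dG: "((\<lambda>s. G (F0 (s, k x))) has_vector_derivative Dv t x) (at t)"
      by (simp add: has_vector_derivative_def)
    have oS: "open {s. (s, x) \<in> Ob}"
    proof -
      have "continuous_on UNIV (\<lambda>s::real. (s, x))" by (intro continuous_intros)
      then have "open ((\<lambda>s. (s, x)) -` Ob)" using Oo by (rule open_vimage[rotated])
      then show ?thesis by (simp add: vimage_def)
    qed
    have eqs: "G (F0 (s, k x)) = h (\<psi> s x)" if "s \<in> {s. (s, x) \<in> Ob}" for s
      using that SF_in(2)[of s x] unfolding G_def Ob_def by (auto simp: gkk)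
    show ?thesis
      by (rule has_vector_derivative_transform_within_open[OF dG oS _ eqs]) (use tx in auto)
  qed
  have qv: "Dv 0 \<sigma>0 = v"
  proof -
    have "((\<lambda>s. h (\<psi> s \<sigma>0)) has_vector_derivative Dv 0 \<sigma>0) (at 0)" by (rule der[OF \<sigma>Ob])
    then show ?thesis using v(1) by (rule vector_derivative_unique_at)
  qed
  define SF2 where "SF2 = {p\<in>SF. F0 p \<in> k ` (U \<inter> V)}"
  have F0c: "continuous_on SF2 F0"
  proof (rule continuous_at_imp_continuous_on, intro ballI)
    fix p assume "p \<in> SF2"
    then have "(F0 has_derivative blinfun_apply (F' p)) (at p)" using F'(1) SF2_def by auto
    then show "isCont F0 p" by (rule has_derivative_continuous)
  qed
  have Phic: "continuous_on SF2 (\<lambda>p. blinfun_apply (G' (F0 p)) (blinfun_apply (F' p) (1, 0)))"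
  proof -
    have a: "continuous_on SF2 (\<lambda>p. G' (F0 p))"
      by (rule continuous_on_compose2[OF G'(2) F0c]) (auto simp: SF2_def)
    have b: "continuous_on SF2 F'" by (rule continuous_on_subset[OF F'(2)]) (auto simp: SF2_def)
    have c: "continuous_on SF2 (\<lambda>p. blinfun_apply (F' p) (1, 0))"
      by (rule bounded_bilinear.continuous_on[OF bounded_bilinear_blinfun_apply b continuous_on_const])
    show ?thesis by (rule bounded_bilinear.continuous_on[OF bounded_bilinear_blinfun_apply a c])
  qed
  define q where "q p = Dv (fst p) (snd p) $ i" for p
  have qc: "continuous_on Ob q"
  proof -
    have kc: "continuous_on Ob (\<lambda>p. k (snd p))"
      by (rule continuous_on_compose2[OF cV(3) continuous_on_snd[OF continuous_on_id]]) (auto simp: Ob_def)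
    have Pc: "continuous_on Ob (\<lambda>p. (fst p, k (snd p)))"
      by (intro continuous_on_Pair continuous_on_fst continuous_on_id kc)
    have "continuous_on Ob (\<lambda>p. (\<lambda>p. blinfun_apply (G' (F0 p)) (blinfun_apply (F' p) (1, 0))) (fst p, k (snd p)))"
      by (rule continuous_on_compose2[OF Phic Pc]) (auto simp: SF2_def dest: SF_in)
    then have "continuous_on Ob (\<lambda>p. Dv (fst p) (snd p))" by (simp add: Dv_def)
    then show ?thesis unfolding q_def by (rule bounded_linear.continuous_on[OF bounded_linear_vec_nth])
  qed
  define q0 where "q0 = v $ i"
  have q0: "q (0, \<sigma>0) = q0" "q0 \<noteq> 0" using qv v(2) q_def q0_def by auto
  define c where "c = \<bar>q0\<bar> / 2"
  have c: "c > 0" using q0 c_def by auto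
  obtain Aq where Aq: "open Aq" "(0, \<sigma>0) \<in> Aq" "\<forall>p\<in>Ob. p \<in> Aq \<longrightarrow> q p \<in> {q0 - c<..<q0 + c}"
  proof -
    have "q (0, \<sigma>0) \<in> {q0 - c<..<q0 + c}" using q0(1) c by auto
    then show ?thesis using qc \<sigma>Ob that unfolding continuous_on_topological
      by (meson open_greaterThanLessThan)
  qed
  obtain T0 X1 where TX: "open T0" "open X1" "(0, \<sigma>0) \<in> T0 \<times> X1" "T0 \<times> X1 \<subseteq> Ob \<inter> Aq"
    using open_prod_elim[OF open_Int[OF Oo Aq(1)]] \<sigma>Ob Aq(2) by blast
  obtain \<epsilon> where \<epsilon>: "\<epsilon> > 0" "ball 0 \<epsilon> \<subseteq> T0" using openE[OF TX(1)] TX(3) by auto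
  define \<delta> where "\<delta> = \<epsilon> / 2"
  have \<delta>: "\<delta> > 0" "\<delta> < \<epsilon>" using \<epsilon> \<delta>_def by auto
  have inO: "(t, x) \<in> Ob" "q (t, x) \<in> {q0 - c<..<q0 + c}" if "\<bar>t\<bar> \<le> \<delta>" "x \<in> X1" for t x
  proof -
    have "t \<in> T0" using \<epsilon>(2) that \<delta> by (auto simp: dist_real_def)
    then have "(t, x) \<in> Ob \<inter> Aq" using TX(4) that by auto
    then show "(t, x) \<in> Ob" "q (t, x) \<in> {q0 - c<..<q0 + c}" using Aq(3) by auto
  qed
  define gg where "gg t x = sgn q0 * (h (\<psi> t x) $ i)" for t x
  have ggd: "((\<lambda>t. gg t x) has_real_derivative (sgn q0 * q (t, x))) (at t)" if "\<bar>t\<bar> \<le> \<delta>" "x \<in> X1" for t x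
  proof -
    have "((\<lambda>s. h (\<psi> s x) $ i) has_real_derivative (Dv t x $ i)) (at t)"
      by (rule vd_component[OF der[OF inO(1)[OF that]]])
    then show ?thesis unfolding gg_def q_def by (auto intro: DERIV_cmult)
  qed
  have ggpos: "sgn q0 * q (t, x) > 0" if "\<bar>t\<bar> \<le> \<delta>" "x \<in> X1" for t x
  proof -
    have "q (t, x) \<in> {q0 - c<..<q0 + c}" by (rule inO(2)[OF that])
    then show ?thesis using q0(2) c_def by (cases "q0 > 0") (auto simp: sgn_if)
  qed
  have hitiff: "\<psi> t x \<in> \<Sigma> \<longleftrightarrow> gg t x = 0" if "\<bar>t\<bar> \<le> \<delta>" "x \<in> X1" for t x
  proof -
    have UV: "\<psi> t x \<in> U" using inO(1)[OF that] Ob_def by auto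
    have s0: "sgn q0 \<noteq> 0" using q0(2) by (simp add: sgn_if)
    have "\<psi> t x \<in> \<Sigma> \<longleftrightarrow> h (\<psi> t x) $ i = 0"
    proof
      assume "\<psi> t x \<in> \<Sigma>"
      then have "h (\<psi> t x) \<in> h ` (U \<inter> \<Sigma>)" using UV by auto
      then show "h (\<psi> t x) $ i = 0" using Uh(3) by auto
    next
      assume "h (\<psi> t x) $ i = 0"
      then have "h (\<psi> t x) \<in> h ` (U \<inter> \<Sigma>)" using Uh(3) UV by auto
      then obtain z where z: "z \<in> U \<inter> \<Sigma>" "h (\<psi> t x) = h z" by auto
      then have "\<psi> t x = z" using cU(6) UV by (auto dest: inj_onD)
      then show "\<psi> t x \<in> \<Sigma>" using z by auto
    qed
    then show ?thesis using s0 gg_def by auto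
  qed
  have "\<exists>W \<tau>. open W \<and> \<sigma>0 \<in> W \<and> W \<subseteq> X1 \<and> continuous_on W \<tau> \<and>
           (\<forall>x\<in>W. \<bar>\<tau> x\<bar> < \<delta> \<and> gg (\<tau> x) x = 0 \<and> (\<forall>t. \<bar>t\<bar> < \<delta> \<and> gg t x = 0 \<longrightarrow> t = \<tau> x))"
  proof (rule mono_zero[OF TX(2) _ \<delta>(1)])
    show "\<sigma>0 \<in> X1" using TX(3) by auto
    show "gg a x < gg b x" if "x \<in> X1" "-\<delta> \<le> a" "a < b" "b \<le> \<delta>" for x a b
    proof (rule DERIV_pos_imp_increasing[OF that(3)])
      fix s assume "a \<le> s" "s \<le> b"
      then have "\<bar>s\<bar> \<le> \<delta>" using that by auto
      then show "\<exists>y. ((\<lambda>t. gg t x) has_real_derivative y) (at s) \<and> 0 < y"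
        using ggd ggpos that(1) by blast
    qed
    show "continuous_on {-\<delta>..\<delta>} (\<lambda>t. gg t x)" if "x \<in> X1" for x
    proof (rule continuous_at_imp_continuous_on, intro ballI)
      fix s assume "s \<in> {-\<delta>..\<delta>}"
      then have "\<bar>s\<bar> \<le> \<delta>" by auto
      then show "isCont (\<lambda>t. gg t x) s" using ggd that by (blast intro: DERIV_isCont)
    qed
    show "continuous_on X1 (gg t)" if "t \<in> {-\<delta>..\<delta>}" for t
    proof -
      have tt: "\<bar>t\<bar> \<le> \<delta>" using that by auto
      have "continuous_on X1 (\<lambda>x. h (\<psi> t x))"
      proof (rule continuous_on_compose2[OF cU(3)])
        show "continuous_on X1 (\<psi> t)" using pc[of X1 "\<lambda>_. t" "\<lambda>x. x"] by (simp add: continuous_on_const continuous_on_id)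
        show "\<psi> t ` X1 \<subseteq> U" using inO(1)[OF tt] Ob_def by auto
      qed
      then have "continuous_on X1 (\<lambda>x. h (\<psi> t x) $ i)"
        by (rule bounded_linear.continuous_on[OF bounded_linear_vec_nth])
      then show ?thesis unfolding gg_def by (intro continuous_on_mult continuous_on_const)
    qed
    show "gg 0 \<sigma>0 = 0" using hitiff[of 0 \<sigma>0] \<sigma>0 fl(1) \<delta> TX(3) by auto
  qed
  then obtain W \<tau> where W: "open W" "\<sigma>0 \<in> W" "W \<subseteq> X1" "continuous_on W \<tau>"
    "\<forall>x\<in>W. \<bar>\<tau> x\<bar> < \<delta> \<and> gg (\<tau> x) x = 0 \<and> (\<forall>t. \<bar>t\<bar> < \<delta> \<and> gg t x = 0 \<longrightarrow> t = \<tau> x)" by blast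
  show ?thesis
  proof (intro exI[of _ W] exI[of _ \<delta>] exI[of _ \<tau>] conjI ballI allI impI)
    fix x assume x: "x \<in> W"
    have Wx: "\<bar>\<tau> x\<bar> < \<delta>" "gg (\<tau> x) x = 0" "\<forall>t. \<bar>t\<bar> < \<delta> \<and> gg t x = 0 \<longrightarrow> t = \<tau> x" using W(5) x by blast+
    have xX: "x \<in> X1" using W(3) x by auto
    show "\<bar>\<tau> x\<bar> < \<delta>" by (rule Wx(1))
    show "\<psi> (\<tau> x) x \<in> \<Sigma>" using hitiff[of "\<tau> x" x] Wx(1,2) xX by auto
    fix t assume t: "\<bar>t\<bar> < \<delta> \<and> \<psi> t x \<in> \<Sigma>"
    then have "gg t x = 0" using hitiff[of t x] xX by auto
    then show "t = \<tau> x" using Wx(3) t by blast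
  qed (use W(1-4) \<delta> in auto)
qed


theorem corollary2p5:
  fixes A :: "('m::topological_space set \<times> ('m \<Rightarrow> real^'n)) set"
    and \<psi> \<phi> :: "real \<Rightarrow> 'm \<Rightarrow> 'm"
    and \<Sigma> :: "'m set"
  assumes "manifold A"
    and "path_connected (UNIV :: 'm set)"
    and "C1_flow A \<psi>" and "C1_flow A \<phi>"
    and "\<And>s t. \<psi> s \<circ> \<phi> t = \<phi> t \<circ> \<psi> s"
    and "global_poincare_section A \<psi> \<Sigma>"
  shows "\<exists>(k :: real \<Rightarrow> 'm \<Rightarrow> 'm) (\<omega> :: 'm \<Rightarrow> real \<Rightarrow> real).
           (\<forall>t. \<forall>\<sigma>\<in>\<Sigma>. k t \<sigma> \<in> \<Sigma>)
         \<and> continuous_on (UNIV \<times> \<Sigma>) (\<lambda>(t,\<sigma>). k t \<sigma>)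
         \<and> continuous_on (\<Sigma> \<times> UNIV) (\<lambda>(\<sigma>,t). \<omega> \<sigma> t)
         \<and> (\<forall>t \<tau>. \<forall>\<sigma>\<in>\<Sigma>. \<psi> (\<tau> + \<omega> \<sigma> t) (k t \<sigma>) = \<phi> t (\<psi> \<tau> \<sigma>))
         \<and> (\<forall>\<sigma>\<in>\<Sigma>. k 0 \<sigma> = \<sigma> \<and> \<omega> \<sigma> 0 = 0)
         \<and> (\<forall>t s. \<forall>\<sigma>\<in>\<Sigma>. k (t + s) \<sigma> = k t (k s \<sigma>)
                         \<and> \<omega> \<sigma> (t + s) = \<omega> \<sigma> t + \<omega> (k t \<sigma>) s)"
proof -
  note M = assms(1) and F\<psi> = assms(3) and F\<phi> = assms(4) and cm = assms(5) and gps = assms(6)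
  have rc: "relatively_closed \<Sigma>" and tr: "transverse_hypersurface A \<psi> \<Sigma>"
    and fb0: "\<forall>x. (\<exists>t>0. \<psi> t x \<in> \<Sigma>) \<and> (\<exists>t<0. \<psi> t x \<in> \<Sigma>)"
    using gps unfolding global_poincare_section_def by auto
  have p1: "\<forall>x. \<psi> 0 x = x" "\<forall>s t x. \<psi> (s + t) x = \<psi> s (\<psi> t x)" "continuous_on UNIV (\<lambda>(t,x). \<psi> t x)"
    using F\<psi> unfolding C1_flow_def by auto
  have p2: "\<forall>x. \<phi> 0 x = x" "\<forall>s t x. \<phi> (s + t) x = \<phi> s (\<phi> t x)" "continuous_on UNIV (\<lambda>(t,x). \<phi> t x)"
    using F\<phi> unfolding C1_flow_def by auto
  have comm: "\<psi> s (\<phi> t x) = \<phi> t (\<psi> s x)" for s t x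
    using fun_cong[OF cm[of s t], of x] by simp
  have fs: "flowsec \<psi> \<Sigma>"
  proof (unfold_locales)
    show "\<psi> 0 x = x" for x using p1(1) by blast
    show "\<psi> (s + t) x = \<psi> s (\<psi> t x)" for s t x using p1(2) by blast
    show "continuous_on UNIV (\<lambda>(t,x). \<psi> t x)" by (rule p1(3))
    show "closed \<Sigma>" by (rule manifold_closed[OF M rc])
    show "\<exists>t>0. \<psi> t x \<in> \<Sigma>" for x using fb0 by blast
    show "\<exists>t<0. \<psi> t x \<in> \<Sigma>" for x using fb0 by blast
    show "\<exists>W \<delta> \<tau>. open W \<and> \<sigma> \<in> W \<and> \<delta> > 0 \<and> continuous_on W \<tau> \<and>
            (\<forall>x\<in>W. \<bar>\<tau> x\<bar> < \<delta> \<and> \<psi> (\<tau> x) x \<in> \<Sigma> \<and> (\<forall>t. \<bar>t\<bar> < \<delta> \<and> \<psi> t x \<in> \<Sigma> \<longrightarrow> t = \<tau> x))"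
      if "\<sigma> \<in> \<Sigma>" for \<sigma> by (rule fb_derive[OF M F\<psi> tr that])
  qed
  have "flowsec2 \<psi> \<Sigma> \<phi>"
    unfolding flowsec2_def flowsec2_axioms_def
  proof (intro conjI allI fs)
    show "\<phi> 0 x = x" for x using p2(1) by blast
    show "\<phi> (s + t) x = \<phi> s (\<phi> t x)" for s t x using p2(2) by blast
    show "continuous_on UNIV (\<lambda>(t,x). \<phi> t x)" by (rule p2(3))
    show "\<psi> s (\<phi> t x) = \<phi> t (\<psi> s x)" for s t x by (rule comm)
  qed
  then show ?thesis by (rule flowsec2.main)
qed

end
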